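(* For a right $R$-module $M$ the following are equivalent: (a) $M$ is quasi-projective and finite $\Sigma$-Rickart; (b) every finitely $M$-generated submodule of any module in $\mathrm{add}(M)$ is $M$-projective; (c) every finitely $M$-generated submodule of any module in $\mathrm{add}(M)$ is quasi-projective.
   Context: Modules are unitary right $R$-modules; $M^{(n)}$ is the direct sum of $n$ copies of $M$. $M$ is Rickart if $\ker\varphi$ is a direct summand of $M$ for all $\varphi\in\mathrm{End}_R(M)$; $M$ is finite $\Sigma$-Rickart if $M^{(n)}$ is Rickart for all $n>0$. $\mathrm{add}(M)$ is the class of modules isomorphic to a direct summand of $M^{(n)}$ for some integer $n>0$. A module $N$ is finitely $M$-generated if there is an epimorphism $M^{(n)}\to N$ for some $n>0$. A module is quasi-projective if it is projective relative to itself. *)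

theory Defs
  imports "HOL-Algebra.Ring"
begin

text \<open>A right module structure: the additive group is given by the ring-record fields
  carrier, zero, add (the multiplicative fields are unused), plus a right scalar action.\<close>

record ('a, 'r) rmodule = "'a ring" +
  rsmult :: "'a \<Rightarrow> 'r \<Rightarrow> 'a" (infixl "\<odot>\<index>" 70)

definition right_module :: "('r, 'c) ring_scheme \<Rightarrow> ('a, 'r, 'd) rmodule_scheme \<Rightarrow> bool" where
  "right_module R M \<longleftrightarrow> ring R \<and> abelian_group M \<and>
     (\<forall>x\<in>carrier M. \<forall>r\<in>carrier R. x \<odot>\<^bsub>M\<^esub> r \<in> carrier M) \<and>
     (\<forall>x\<in>carrier M. \<forall>y\<in>carrier M. \<forall>r\<in>carrier R.
        (x \<oplus>\<^bsub>M\<^esub> y) \<odot>\<^bsub>M\<^esub> r = (x \<odot>\<^bsub>M\<^esub> r) \<oplus>\<^bsub>M\<^esub> (y \<odot>\<^bsub>M\<^esub> r)) \<and>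
     (\<forall>x\<in>carrier M. \<forall>r\<in>carrier R. \<forall>s\<in>carrier R.
        x \<odot>\<^bsub>M\<^esub> (r \<oplus>\<^bsub>R\<^esub> s) = (x \<odot>\<^bsub>M\<^esub> r) \<oplus>\<^bsub>M\<^esub> (x \<odot>\<^bsub>M\<^esub> s)) \<and>
     (\<forall>x\<in>carrier M. \<forall>r\<in>carrier R. \<forall>s\<in>carrier R.
        x \<odot>\<^bsub>M\<^esub> (r \<otimes>\<^bsub>R\<^esub> s) = (x \<odot>\<^bsub>M\<^esub> r) \<odot>\<^bsub>M\<^esub> s) \<and>
     (\<forall>x\<in>carrier M. x \<odot>\<^bsub>M\<^esub> \<one>\<^bsub>R\<^esub> = x)"

definition rmod_hom :: "('r, 'c) ring_scheme \<Rightarrow> ('a, 'r, 'd) rmodule_scheme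
    \<Rightarrow> ('b, 'r, 'e) rmodule_scheme \<Rightarrow> ('a \<Rightarrow> 'b) set" where
  "rmod_hom R M N = {f. f \<in> carrier M \<rightarrow> carrier N \<and>
     (\<forall>x\<in>carrier M. \<forall>y\<in>carrier M. f (x \<oplus>\<^bsub>M\<^esub> y) = f x \<oplus>\<^bsub>N\<^esub> f y) \<and>
     (\<forall>x\<in>carrier M. \<forall>r\<in>carrier R. f (x \<odot>\<^bsub>M\<^esub> r) = f x \<odot>\<^bsub>N\<^esub> r)}"

definition rmod_epi :: "('r, 'c) ring_scheme \<Rightarrow> ('a, 'r, 'd) rmodule_scheme
    \<Rightarrow> ('b, 'r, 'e) rmodule_scheme \<Rightarrow> ('a \<Rightarrow> 'b) set" where
  "rmod_epi R M N = {f. f \<in> rmod_hom R M N \<and> f ` carrier M = carrier N}"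

definition rmod_ker :: "('a, 'r, 'd) rmodule_scheme \<Rightarrow> ('b, 'r, 'e) rmodule_scheme
    \<Rightarrow> ('a \<Rightarrow> 'b) \<Rightarrow> 'a set" where
  "rmod_ker M N f = {x \<in> carrier M. f x = \<zero>\<^bsub>N\<^esub>}"

definition submod :: "('r, 'c) ring_scheme \<Rightarrow> 'a set \<Rightarrow> ('a, 'r, 'd) rmodule_scheme \<Rightarrow> bool" where
  "submod R N M \<longleftrightarrow> N \<subseteq> carrier M \<and> \<zero>\<^bsub>M\<^esub> \<in> N \<and>
     (\<forall>x\<in>N. \<forall>y\<in>N. x \<oplus>\<^bsub>M\<^esub> y \<in> N) \<and>
     (\<forall>x\<in>N. \<ominus>\<^bsub>M\<^esub> x \<in> N) \<and>
     (\<forall>x\<in>N. \<forall>r\<in>carrier R. x \<odot>\<^bsub>M\<^esub> r \<in> N)"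

abbreviation subm :: "('a, 'r, 'd) rmodule_scheme \<Rightarrow> 'a set \<Rightarrow> ('a, 'r, 'd) rmodule_scheme" where
  "subm M N \<equiv> M\<lparr>carrier := N\<rparr>"

definition direct_summand :: "('r, 'c) ring_scheme \<Rightarrow> 'a set \<Rightarrow> ('a, 'r, 'd) rmodule_scheme \<Rightarrow> bool" where
  "direct_summand R N M \<longleftrightarrow> submod R N M \<and>
     (\<exists>K. submod R K M \<and> N \<inter> K = {\<zero>\<^bsub>M\<^esub>} \<and>
          (\<forall>x\<in>carrier M. \<exists>a\<in>N. \<exists>b\<in>K. x = a \<oplus>\<^bsub>M\<^esub> b))"

text \<open>The direct sum M^(n) of n copies of M, realised as functions nat => 'a supported on {..<n}.\<close>

definition dsum_pow :: "('a, 'r, 'd) rmodule_scheme \<Rightarrow> nat \<Rightarrow> (nat \<Rightarrow> 'a, 'r) rmodule" where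
  "dsum_pow M n = \<lparr>carrier = {v. (\<forall>i<n. v i \<in> carrier M) \<and> (\<forall>i\<ge>n. v i = \<zero>\<^bsub>M\<^esub>)},
      mult = (\<lambda>v w. undefined), one = undefined,
      zero = (\<lambda>i. \<zero>\<^bsub>M\<^esub>),
      add = (\<lambda>v w i. v i \<oplus>\<^bsub>M\<^esub> w i),
      rsmult = (\<lambda>v r i. if i < n then v i \<odot>\<^bsub>M\<^esub> r else \<zero>\<^bsub>M\<^esub>)\<rparr>"

definition rickart :: "('r, 'c) ring_scheme \<Rightarrow> ('a, 'r, 'd) rmodule_scheme \<Rightarrow> bool" where
  "rickart R M \<longleftrightarrow> (\<forall>\<phi>\<in>rmod_hom R M M. direct_summand R (rmod_ker M M \<phi>) M)"

definition fin_sigma_rickart :: "('r, 'c) ring_scheme \<Rightarrow> ('a, 'r, 'd) rmodule_scheme \<Rightarrow> bool" where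
  "fin_sigma_rickart R M \<longleftrightarrow> (\<forall>n>0. rickart R (dsum_pow M n))"

definition fin_gen_by :: "('r, 'c) ring_scheme \<Rightarrow> ('b, 'r, 'e) rmodule_scheme
    \<Rightarrow> ('a, 'r, 'd) rmodule_scheme \<Rightarrow> bool" where
  "fin_gen_by R N M \<longleftrightarrow> (\<exists>n>0. rmod_epi R (dsum_pow M n) N \<noteq> {})"

text \<open>Every epimorphic image of M
  has cardinality at most that of the carrier of M, so up to isomorphism it suffices to let K
  range over right modules whose elements have the same type as those of M.\<close>

definition rel_projective :: "('r, 'c) ring_scheme \<Rightarrow> ('b, 'r, 'e) rmodule_scheme
    \<Rightarrow> ('a, 'r, 'd) rmodule_scheme \<Rightarrow> bool" where
  "rel_projective R N M \<longleftrightarrow>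
     (\<forall>K :: ('a, 'r) rmodule. \<forall>g f. right_module R K \<and> g \<in> rmod_epi R M K \<and> f \<in> rmod_hom R N K
        \<longrightarrow> (\<exists>h\<in>rmod_hom R N M. \<forall>x\<in>carrier N. g (h x) = f x))"

definition quasi_projective :: "('r, 'c) ring_scheme \<Rightarrow> ('a, 'r, 'd) rmodule_scheme \<Rightarrow> bool" where
  "quasi_projective R M \<longleftrightarrow> rel_projective R M M"

end

theory Submission
  imports Defs
begin


lemma rm_ag: "right_module R M \<Longrightarrow> abelian_group M"
  by (simp add: right_module_def)
lemma rm_ring: "right_module R M \<Longrightarrow> ring R"
  by (simp add: right_module_def)
lemma rm_closed: "right_module R M \<Longrightarrow> x \<in> carrier M \<Longrightarrow> r \<in> carrier R \<Longrightarrow> x \<odot>\<^bsub>M\<^esub> r \<in> carrier M"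
  by (simp add: right_module_def)
lemma rm_distl: "right_module R M \<Longrightarrow> x \<in> carrier M \<Longrightarrow> y \<in> carrier M \<Longrightarrow> r \<in> carrier R \<Longrightarrow>
   (x \<oplus>\<^bsub>M\<^esub> y) \<odot>\<^bsub>M\<^esub> r = (x \<odot>\<^bsub>M\<^esub> r) \<oplus>\<^bsub>M\<^esub> (y \<odot>\<^bsub>M\<^esub> r)"
  by (simp add: right_module_def)
lemma rm_distr: "right_module R M \<Longrightarrow> x \<in> carrier M \<Longrightarrow> r \<in> carrier R \<Longrightarrow> s \<in> carrier R \<Longrightarrow>
   x \<odot>\<^bsub>M\<^esub> (r \<oplus>\<^bsub>R\<^esub> s) = (x \<odot>\<^bsub>M\<^esub> r) \<oplus>\<^bsub>M\<^esub> (x \<odot>\<^bsub>M\<^esub> s)"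
  by (simp add: right_module_def)
lemma rm_assoc: "right_module R M \<Longrightarrow> x \<in> carrier M \<Longrightarrow> r \<in> carrier R \<Longrightarrow> s \<in> carrier R \<Longrightarrow>
   x \<odot>\<^bsub>M\<^esub> (r \<otimes>\<^bsub>R\<^esub> s) = (x \<odot>\<^bsub>M\<^esub> r) \<odot>\<^bsub>M\<^esub> s"
  by (simp add: right_module_def)
lemma rm_one: "right_module R M \<Longrightarrow> x \<in> carrier M \<Longrightarrow> x \<odot>\<^bsub>M\<^esub> \<one>\<^bsub>R\<^esub> = x"
  by (simp add: right_module_def)

lemma ag_cancel0:
  assumes "abelian_group G" "z \<in> carrier G" "y \<in> carrier G" "z \<oplus>\<^bsub>G\<^esub> y = y"
  shows "z = \<zero>\<^bsub>G\<^esub>"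
proof -
  interpret abelian_group G by fact
  show ?thesis using assms add.r_cancel_one by auto
qed

lemma rm_zero_smult:
  assumes "right_module R M" "r \<in> carrier R"
  shows "\<zero>\<^bsub>M\<^esub> \<odot>\<^bsub>M\<^esub> r = \<zero>\<^bsub>M\<^esub>"
proof -
  interpret abelian_group M using assms rm_ag by blast
  have "\<zero>\<^bsub>M\<^esub> \<odot>\<^bsub>M\<^esub> r = (\<zero>\<^bsub>M\<^esub> \<oplus>\<^bsub>M\<^esub> \<zero>\<^bsub>M\<^esub>) \<odot>\<^bsub>M\<^esub> r" by simp
  also have "\<dots> = (\<zero>\<^bsub>M\<^esub> \<odot>\<^bsub>M\<^esub> r) \<oplus>\<^bsub>M\<^esub> (\<zero>\<^bsub>M\<^esub> \<odot>\<^bsub>M\<^esub> r)"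
    using rm_distl[OF assms(1) zero_closed zero_closed assms(2)] .
  finally have "(\<zero>\<^bsub>M\<^esub> \<odot>\<^bsub>M\<^esub> r) \<oplus>\<^bsub>M\<^esub> (\<zero>\<^bsub>M\<^esub> \<odot>\<^bsub>M\<^esub> r) = \<zero>\<^bsub>M\<^esub> \<odot>\<^bsub>M\<^esub> r" by simp
  then show ?thesis using ag_cancel0[OF abelian_group_axioms] rm_closed[OF assms(1)] assms by simp
qed

lemma rm_minus_smult:
  assumes "right_module R M" "r \<in> carrier R" "x \<in> carrier M" "y \<in> carrier M"
  shows "(x \<ominus>\<^bsub>M\<^esub> y) \<odot>\<^bsub>M\<^esub> r = (x \<odot>\<^bsub>M\<^esub> r) \<ominus>\<^bsub>M\<^esub> (y \<odot>\<^bsub>M\<^esub> r)"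
proof -
  interpret abelian_group M using assms rm_ag by blast
  have "((x \<ominus>\<^bsub>M\<^esub> y) \<odot>\<^bsub>M\<^esub> r) \<oplus>\<^bsub>M\<^esub> (y \<odot>\<^bsub>M\<^esub> r) = ((x \<ominus>\<^bsub>M\<^esub> y) \<oplus>\<^bsub>M\<^esub> y) \<odot>\<^bsub>M\<^esub> r"
    using rm_distl[OF assms(1)] assms by simp
  also have "\<dots> = x \<odot>\<^bsub>M\<^esub> r" using assms by (simp add: a_minus_def a_assoc l_neg)
  finally have e: "((x \<ominus>\<^bsub>M\<^esub> y) \<odot>\<^bsub>M\<^esub> r) \<oplus>\<^bsub>M\<^esub> (y \<odot>\<^bsub>M\<^esub> r) = x \<odot>\<^bsub>M\<^esub> r" .
  have c1: "(x \<ominus>\<^bsub>M\<^esub> y) \<odot>\<^bsub>M\<^esub> r \<in> carrier M" "y \<odot>\<^bsub>M\<^esub> r \<in> carrier M"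
    using rm_closed[OF assms(1)] assms by auto
  have "(x \<odot>\<^bsub>M\<^esub> r) \<ominus>\<^bsub>M\<^esub> (y \<odot>\<^bsub>M\<^esub> r) = (((x \<ominus>\<^bsub>M\<^esub> y) \<odot>\<^bsub>M\<^esub> r) \<oplus>\<^bsub>M\<^esub> (y \<odot>\<^bsub>M\<^esub> r)) \<ominus>\<^bsub>M\<^esub> (y \<odot>\<^bsub>M\<^esub> r)"
    using e by simp
  also have "\<dots> = (x \<ominus>\<^bsub>M\<^esub> y) \<odot>\<^bsub>M\<^esub> r" using c1 by (simp add: a_minus_def a_assoc r_neg)
  finally show ?thesis by simp
qed

lemma hom_closed: "f \<in> rmod_hom R X Y \<Longrightarrow> x \<in> carrier X \<Longrightarrow> f x \<in> carrier Y"
  by (auto simp: rmod_hom_def)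
lemma hom_add: "f \<in> rmod_hom R X Y \<Longrightarrow> x \<in> carrier X \<Longrightarrow> y \<in> carrier X \<Longrightarrow> f (x \<oplus>\<^bsub>X\<^esub> y) = f x \<oplus>\<^bsub>Y\<^esub> f y"
  by (auto simp: rmod_hom_def)
lemma hom_smult: "f \<in> rmod_hom R X Y \<Longrightarrow> x \<in> carrier X \<Longrightarrow> r \<in> carrier R \<Longrightarrow> f (x \<odot>\<^bsub>X\<^esub> r) = f x \<odot>\<^bsub>Y\<^esub> r"
  by (auto simp: rmod_hom_def)
lemma homI:
  assumes "\<And>x. x \<in> carrier X \<Longrightarrow> f x \<in> carrier Y"
    "\<And>x y. x \<in> carrier X \<Longrightarrow> y \<in> carrier X \<Longrightarrow> f (x \<oplus>\<^bsub>X\<^esub> y) = f x \<oplus>\<^bsub>Y\<^esub> f y"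
    "\<And>x r. x \<in> carrier X \<Longrightarrow> r \<in> carrier R \<Longrightarrow> f (x \<odot>\<^bsub>X\<^esub> r) = f x \<odot>\<^bsub>Y\<^esub> r"
  shows "f \<in> rmod_hom R X Y"
  using assms by (auto simp: rmod_hom_def)

lemma hom_zero:
  assumes "f \<in> rmod_hom R X Y" "abelian_group X" "abelian_group Y"
  shows "f \<zero>\<^bsub>X\<^esub> = \<zero>\<^bsub>Y\<^esub>"
proof -
  interpret X: abelian_group X by fact
  interpret Y: abelian_group Y by fact
  have "f \<zero>\<^bsub>X\<^esub> \<oplus>\<^bsub>Y\<^esub> f \<zero>\<^bsub>X\<^esub> = f \<zero>\<^bsub>X\<^esub>"
    using hom_add[OF assms(1) X.zero_closed X.zero_closed] by simp
  then show ?thesis using Y.add.r_cancel_one hom_closed[OF assms(1) X.zero_closed] by auto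
qed

lemma hom_inv:
  assumes "f \<in> rmod_hom R X Y" "abelian_group X" "abelian_group Y" "x \<in> carrier X"
  shows "f (\<ominus>\<^bsub>X\<^esub> x) = \<ominus>\<^bsub>Y\<^esub> f x"
proof -
  interpret X: abelian_group X by fact
  interpret Y: abelian_group Y by fact
  have "f (\<ominus>\<^bsub>X\<^esub> x) \<oplus>\<^bsub>Y\<^esub> f x = \<zero>\<^bsub>Y\<^esub>"
    using hom_add[OF assms(1) X.a_inv_closed[OF assms(4)] assms(4)] hom_zero[OF assms(1-3)] assms(4)
    by (simp add: X.l_neg)
  then show ?thesis using Y.minus_equality hom_closed[OF assms(1)] assms(4) by auto
qed

lemma hom_minus:
  assumes "f \<in> rmod_hom R X Y" "abelian_group X" "abelian_group Y" "x \<in> carrier X" "y \<in> carrier X"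
  shows "f (x \<ominus>\<^bsub>X\<^esub> y) = f x \<ominus>\<^bsub>Y\<^esub> f y"
proof -
  interpret X: abelian_group X by fact
  show ?thesis using hom_add[OF assms(1) assms(4) X.a_inv_closed[OF assms(5)]] hom_inv[OF assms(1-3,5)]
    by (simp add: a_minus_def)
qed

lemma hom_comp: "f \<in> rmod_hom R X Y \<Longrightarrow> g \<in> rmod_hom R Y Z \<Longrightarrow> (\<lambda>x. g (f x)) \<in> rmod_hom R X Z"
  by (rule homI) (auto simp: hom_closed hom_add hom_smult)

lemma hom_sum:
  assumes "f1 \<in> rmod_hom R X Z" "f2 \<in> rmod_hom R X Z" "right_module R Z"
  shows "(\<lambda>x. f1 x \<oplus>\<^bsub>Z\<^esub> f2 x) \<in> rmod_hom R X Z"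
proof -
  interpret Z: abelian_group Z using assms rm_ag by blast
  show ?thesis
  proof (rule homI)
    fix x assume "x \<in> carrier X" then show "f1 x \<oplus>\<^bsub>Z\<^esub> f2 x \<in> carrier Z"
      using hom_closed assms by (metis Z.a_closed)
  next
    fix x y assume xy: "x \<in> carrier X" "y \<in> carrier X"
    have c: "f1 x \<in> carrier Z" "f1 y \<in> carrier Z" "f2 x \<in> carrier Z" "f2 y \<in> carrier Z"
      using hom_closed[OF assms(1)] hom_closed[OF assms(2)] xy by auto
    show "f1 (x \<oplus>\<^bsub>X\<^esub> y) \<oplus>\<^bsub>Z\<^esub> f2 (x \<oplus>\<^bsub>X\<^esub> y) = (f1 x \<oplus>\<^bsub>Z\<^esub> f2 x) \<oplus>\<^bsub>Z\<^esub> (f1 y \<oplus>\<^bsub>Z\<^esub> f2 y)"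
      using hom_add[OF assms(1) xy] hom_add[OF assms(2) xy] c by (simp add: Z.a_ac)
  next
    fix x r assume xr: "x \<in> carrier X" "r \<in> carrier R"
    show "f1 (x \<odot>\<^bsub>X\<^esub> r) \<oplus>\<^bsub>Z\<^esub> f2 (x \<odot>\<^bsub>X\<^esub> r) = (f1 x \<oplus>\<^bsub>Z\<^esub> f2 x) \<odot>\<^bsub>Z\<^esub> r"
      using hom_smult[OF assms(1) xr] hom_smult[OF assms(2) xr] rm_distl[OF assms(3)]
        hom_closed[OF assms(1)] hom_closed[OF assms(2)] xr by simp
  qed
qed

section \<open>Module structure induced by a surjective map\<close>

lemma epi_module:
  assumes K: "right_module R K"
    and surj: "q ` carrier K = carrier Q"
    and qadd: "\<And>a b. a \<in> carrier K \<Longrightarrow> b \<in> carrier K \<Longrightarrow> q (a \<oplus>\<^bsub>K\<^esub> b) = q a \<oplus>\<^bsub>Q\<^esub> q b"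
    and qsm: "\<And>a r. a \<in> carrier K \<Longrightarrow> r \<in> carrier R \<Longrightarrow> q (a \<odot>\<^bsub>K\<^esub> r) = q a \<odot>\<^bsub>Q\<^esub> r"
    and qz: "\<zero>\<^bsub>Q\<^esub> = q \<zero>\<^bsub>K\<^esub>"
  shows "right_module R Q"
proof -
  interpret K: abelian_group K using K rm_ag by blast
  interpret R: ring R using K rm_ring by blast
  have qc: "\<And>a. a \<in> carrier K \<Longrightarrow> q a \<in> carrier Q" using surj by blast
  have ex: "\<And>x. x \<in> carrier Q \<Longrightarrow> \<exists>a\<in>carrier K. x = q a" using surj by blast
  have ag: "abelian_group Q"
  proof (rule abelian_groupI)
    fix x y assume x: "x \<in> carrier Q" and y: "y \<in> carrier Q"
    obtain a where a: "a \<in> carrier K" "x = q a" using ex[OF x] by blast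
    obtain b where b: "b \<in> carrier K" "y = q b" using ex[OF y] by blast
    have "q (a \<oplus>\<^bsub>K\<^esub> b) \<in> carrier Q" using a b qc by simp
    then show "x \<oplus>\<^bsub>Q\<^esub> y \<in> carrier Q" using qadd[OF a(1) b(1)] a b by simp
  next
    show "\<zero>\<^bsub>Q\<^esub> \<in> carrier Q" using qz qc by simp
  next
    fix x y z assume x: "x \<in> carrier Q" and y: "y \<in> carrier Q" and z: "z \<in> carrier Q"
    obtain a where a: "a \<in> carrier K" "x = q a" using ex[OF x] by blast
    obtain b where b: "b \<in> carrier K" "y = q b" using ex[OF y] by blast
    obtain c where c: "c \<in> carrier K" "z = q c" using ex[OF z] by blast
    have "(x \<oplus>\<^bsub>Q\<^esub> y) \<oplus>\<^bsub>Q\<^esub> z = q ((a \<oplus>\<^bsub>K\<^esub> b) \<oplus>\<^bsub>K\<^esub> c)"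
      using a b c qadd[OF a(1) b(1)] qadd[OF K.a_closed[OF a(1) b(1)] c(1)] by simp
    also have "\<dots> = q (a \<oplus>\<^bsub>K\<^esub> (b \<oplus>\<^bsub>K\<^esub> c))" using a b c K.a_assoc by simp
    also have "\<dots> = x \<oplus>\<^bsub>Q\<^esub> (y \<oplus>\<^bsub>Q\<^esub> z)"
      using a b c qadd[OF b(1) c(1)] qadd[OF a(1) K.a_closed[OF b(1) c(1)]] by simp
    finally show "(x \<oplus>\<^bsub>Q\<^esub> y) \<oplus>\<^bsub>Q\<^esub> z = x \<oplus>\<^bsub>Q\<^esub> (y \<oplus>\<^bsub>Q\<^esub> z)" .
  next
    fix x y assume x: "x \<in> carrier Q" and y: "y \<in> carrier Q"
    obtain a where a: "a \<in> carrier K" "x = q a" using ex[OF x] by blast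
    obtain b where b: "b \<in> carrier K" "y = q b" using ex[OF y] by blast
    show "x \<oplus>\<^bsub>Q\<^esub> y = y \<oplus>\<^bsub>Q\<^esub> x"
      using a b qadd[OF a(1) b(1)] qadd[OF b(1) a(1)] K.a_comm[OF a(1) b(1)] by simp
  next
    fix x assume x: "x \<in> carrier Q"
    obtain a where a: "a \<in> carrier K" "x = q a" using ex[OF x] by blast
    show "\<zero>\<^bsub>Q\<^esub> \<oplus>\<^bsub>Q\<^esub> x = x"
      using a qadd[OF K.zero_closed a(1)] qz K.l_zero[OF a(1)] by simp
  next
    fix x assume x: "x \<in> carrier Q"
    obtain a where a: "a \<in> carrier K" "x = q a" using ex[OF x] by blast
    have "q (\<ominus>\<^bsub>K\<^esub> a) \<oplus>\<^bsub>Q\<^esub> x = \<zero>\<^bsub>Q\<^esub>"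
      using a qadd[OF K.a_inv_closed[OF a(1)] a(1)] qz K.l_neg[OF a(1)] by simp
    then show "\<exists>y\<in>carrier Q. y \<oplus>\<^bsub>Q\<^esub> x = \<zero>\<^bsub>Q\<^esub>" using qc K.a_inv_closed[OF a(1)] by blast
  qed
  show ?thesis unfolding right_module_def
  proof (intro conjI ballI)
    show "ring R" using K rm_ring by blast
    show "abelian_group Q" by (fact ag)
  next
    fix x r assume "x \<in> carrier Q" and r: "r \<in> carrier R"
    then obtain a where a: "a \<in> carrier K" "x = q a" using ex by blast
    have "q (a \<odot>\<^bsub>K\<^esub> r) \<in> carrier Q" using qc rm_closed[OF K a(1) r] by simp
    then show "x \<odot>\<^bsub>Q\<^esub> r \<in> carrier Q" using qsm a r by simp
  next
    fix x y r assume "x \<in> carrier Q" "y \<in> carrier Q" and r: "r \<in> carrier R"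
    then obtain a b where ab: "a \<in> carrier K" "b \<in> carrier K" "x = q a" "y = q b" using ex by blast
    have "(x \<oplus>\<^bsub>Q\<^esub> y) \<odot>\<^bsub>Q\<^esub> r = q ((a \<oplus>\<^bsub>K\<^esub> b) \<odot>\<^bsub>K\<^esub> r)" using ab r qadd qsm by simp
    also have "\<dots> = q ((a \<odot>\<^bsub>K\<^esub> r) \<oplus>\<^bsub>K\<^esub> (b \<odot>\<^bsub>K\<^esub> r))" using ab r rm_distl[OF K] by simp
    also have "\<dots> = (x \<odot>\<^bsub>Q\<^esub> r) \<oplus>\<^bsub>Q\<^esub> (y \<odot>\<^bsub>Q\<^esub> r)" using ab r qadd qsm rm_closed[OF K] by simp
    finally show "(x \<oplus>\<^bsub>Q\<^esub> y) \<odot>\<^bsub>Q\<^esub> r = (x \<odot>\<^bsub>Q\<^esub> r) \<oplus>\<^bsub>Q\<^esub> (y \<odot>\<^bsub>Q\<^esub> r)" .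
  next
    fix x r s assume "x \<in> carrier Q" and r: "r \<in> carrier R" "s \<in> carrier R"
    then obtain a where a: "a \<in> carrier K" "x = q a" using ex by blast
    have "x \<odot>\<^bsub>Q\<^esub> (r \<oplus>\<^bsub>R\<^esub> s) = q (a \<odot>\<^bsub>K\<^esub> (r \<oplus>\<^bsub>R\<^esub> s))" using a r qsm by simp
    also have "\<dots> = q ((a \<odot>\<^bsub>K\<^esub> r) \<oplus>\<^bsub>K\<^esub> (a \<odot>\<^bsub>K\<^esub> s))" using a r rm_distr[OF K] by simp
    also have "\<dots> = (x \<odot>\<^bsub>Q\<^esub> r) \<oplus>\<^bsub>Q\<^esub> (x \<odot>\<^bsub>Q\<^esub> s)" using a r qadd qsm rm_closed[OF K] by simp
    finally show "x \<odot>\<^bsub>Q\<^esub> (r \<oplus>\<^bsub>R\<^esub> s) = (x \<odot>\<^bsub>Q\<^esub> r) \<oplus>\<^bsub>Q\<^esub> (x \<odot>\<^bsub>Q\<^esub> s)" .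
  next
    fix x r s assume "x \<in> carrier Q" and r: "r \<in> carrier R" "s \<in> carrier R"
    then obtain a where a: "a \<in> carrier K" "x = q a" using ex by blast
    have "x \<odot>\<^bsub>Q\<^esub> (r \<otimes>\<^bsub>R\<^esub> s) = q (a \<odot>\<^bsub>K\<^esub> (r \<otimes>\<^bsub>R\<^esub> s))" using a r qsm by simp
    also have "\<dots> = q ((a \<odot>\<^bsub>K\<^esub> r) \<odot>\<^bsub>K\<^esub> s)" using a r rm_assoc[OF K] by simp
    also have "\<dots> = (x \<odot>\<^bsub>Q\<^esub> r) \<odot>\<^bsub>Q\<^esub> s" using a r qsm rm_closed[OF K] by simp
    finally show "x \<odot>\<^bsub>Q\<^esub> (r \<otimes>\<^bsub>R\<^esub> s) = (x \<odot>\<^bsub>Q\<^esub> r) \<odot>\<^bsub>Q\<^esub> s" .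
  next
    fix x assume "x \<in> carrier Q"
    then obtain a where a: "a \<in> carrier K" "x = q a" using ex by blast
    then show "x \<odot>\<^bsub>Q\<^esub> \<one>\<^bsub>R\<^esub> = x" using qsm[of a "\<one>\<^bsub>R\<^esub>"] rm_one[OF K a(1)] by simp
  qed
qed

section \<open>Transport of structure\<close>

definition tr :: "('k, 'r, 'd) rmodule_scheme \<Rightarrow> ('k \<Rightarrow> 'x) \<Rightarrow> ('x, 'r) rmodule" where
  "tr K e = \<lparr>carrier = e ` carrier K, mult = (\<lambda>a b. undefined), one = undefined,
     zero = e \<zero>\<^bsub>K\<^esub>,
     add = (\<lambda>a b. e (inv_into (carrier K) e a \<oplus>\<^bsub>K\<^esub> inv_into (carrier K) e b)),
     rsmult = (\<lambda>a r. e (inv_into (carrier K) e a \<odot>\<^bsub>K\<^esub> r))\<rparr>"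

lemma tr_hom:
  assumes "right_module R K" "inj_on e (carrier K)"
  shows "e \<in> rmod_hom R K (tr K e)"
proof -
  interpret K: abelian_group K using assms rm_ag by blast
  show ?thesis
    by (rule homI) (auto simp: tr_def assms(2) inv_into_f_f)
qed

lemma tr_module:
  assumes "right_module R K" "inj_on e (carrier K)"
  shows "right_module R (tr K e)"
  by (rule epi_module[OF assms(1), of e]) (auto simp: tr_def assms(2) inv_into_f_f)

lemma rel_proj_any:
  fixes X :: "('x, 'r, 'd) rmodule_scheme" and K :: "('k, 'r, 'e) rmodule_scheme"
  assumes P: "rel_projective R N X" and K: "right_module R K"
    and g: "g \<in> rmod_epi R X K" and f: "f \<in> rmod_hom R N K"
  shows "\<exists>h\<in>rmod_hom R N X. \<forall>x\<in>carrier N. g (h x) = f x"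
proof -
  define e where "e = (\<lambda>k. SOME x. x \<in> carrier X \<and> g x = k)"
  have e: "e k \<in> carrier X \<and> g (e k) = k" if "k \<in> carrier K" for k
  proof -
    have "\<exists>x. x \<in> carrier X \<and> g x = k" using g that unfolding rmod_epi_def by (metis (mono_tags, lifting) imageE mem_Collect_eq)
    then show ?thesis unfolding e_def by (rule someI_ex)
  qed
  have inj: "inj_on e (carrier K)" by (metis e inj_onI)
  let ?K = "tr K e"
  have K': "right_module R ?K" using tr_module[OF K inj] .
  have eh: "e \<in> rmod_hom R K ?K" using tr_hom[OF K inj] .
  have gh: "g \<in> rmod_hom R X K" using g by (simp add: rmod_epi_def)
  have g': "(\<lambda>x. e (g x)) \<in> rmod_epi R X ?K"
    using hom_comp[OF gh eh] g unfolding rmod_epi_def by (auto simp: tr_def image_image[symmetric])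
  have f': "(\<lambda>x. e (f x)) \<in> rmod_hom R N ?K" using hom_comp[OF f eh] .
  obtain h where h: "h \<in> rmod_hom R N X" "\<forall>x\<in>carrier N. e (g (h x)) = e (f x)"
    using P K' g' f' unfolding rel_projective_def by blast
  have "\<forall>x\<in>carrier N. g (h x) = f x"
  proof
    fix x assume x: "x \<in> carrier N"
    have "g (h x) \<in> carrier K" "f x \<in> carrier K" using hom_closed[OF gh hom_closed[OF h(1) x]] hom_closed[OF f x] by auto
    then show "g (h x) = f x" using h(2) x inj by (meson inj_onD)
  qed
  then show ?thesis using h(1) by blast
qed

section \<open>Quotient modules\<close>

lemma ag_minus_self: "abelian_group G \<Longrightarrow> a \<in> carrier G \<Longrightarrow> a \<ominus>\<^bsub>G\<^esub> a = \<zero>\<^bsub>G\<^esub>"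
  by (simp add: a_minus_def abelian_group.r_neg)
lemma ag_minus_swap: assumes "abelian_group G" "a \<in> carrier G" "b \<in> carrier G"
  shows "a \<ominus>\<^bsub>G\<^esub> b = \<ominus>\<^bsub>G\<^esub> (b \<ominus>\<^bsub>G\<^esub> a)"
proof - interpret abelian_group G by fact
  show ?thesis using assms by (simp add: a_minus_def minus_add minus_minus a_comm)
qed
lemma ag_minus_trans: assumes "abelian_group G" "a \<in> carrier G" "b \<in> carrier G" "c \<in> carrier G"
  shows "(a \<ominus>\<^bsub>G\<^esub> b) \<oplus>\<^bsub>G\<^esub> (b \<ominus>\<^bsub>G\<^esub> c) = a \<ominus>\<^bsub>G\<^esub> c"
proof - interpret abelian_group G by fact
  show ?thesis using assms by (simp add: a_minus_def a_assoc r_neg1)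
qed
lemma ag_minus_add: assumes "abelian_group G" "a \<in> carrier G" "b \<in> carrier G" "c \<in> carrier G" "d \<in> carrier G"
  shows "(a \<oplus>\<^bsub>G\<^esub> b) \<ominus>\<^bsub>G\<^esub> (c \<oplus>\<^bsub>G\<^esub> d) = (a \<ominus>\<^bsub>G\<^esub> c) \<oplus>\<^bsub>G\<^esub> (b \<ominus>\<^bsub>G\<^esub> d)"
proof - interpret abelian_group G by fact
  show ?thesis using assms by (simp add: a_minus_def minus_add a_ac)
qed
lemma ag_add_minus_cancel: assumes "abelian_group G" "a \<in> carrier G" "b \<in> carrier G"
  shows "b \<oplus>\<^bsub>G\<^esub> (a \<ominus>\<^bsub>G\<^esub> b) = a"
proof - interpret abelian_group G by fact
  show ?thesis using assms by (simp add: a_minus_def r_neg2 a_lcomm r_neg)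
qed
lemma ag_add_minus_cancel2: assumes "abelian_group G" "a \<in> carrier G" "b \<in> carrier G"
  shows "(a \<oplus>\<^bsub>G\<^esub> b) \<ominus>\<^bsub>G\<^esub> a = b"
proof - interpret abelian_group G by fact
  have "(a \<oplus>\<^bsub>G\<^esub> b) \<oplus>\<^bsub>G\<^esub> \<ominus>\<^bsub>G\<^esub> a = \<ominus>\<^bsub>G\<^esub> a \<oplus>\<^bsub>G\<^esub> (a \<oplus>\<^bsub>G\<^esub> b)"
    using assms by (simp add: a_comm)
  then show ?thesis using assms by (simp add: a_minus_def r_neg1)
qed

lemma submodD:
  assumes "submod R U K"
  shows "U \<subseteq> carrier K" "\<zero>\<^bsub>K\<^esub> \<in> U" "\<And>x y. x \<in> U \<Longrightarrow> y \<in> U \<Longrightarrow> x \<oplus>\<^bsub>K\<^esub> y \<in> U"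
    "\<And>x. x \<in> U \<Longrightarrow> \<ominus>\<^bsub>K\<^esub> x \<in> U" "\<And>x r. x \<in> U \<Longrightarrow> r \<in> carrier R \<Longrightarrow> x \<odot>\<^bsub>K\<^esub> r \<in> U"
  using assms by (auto simp: submod_def)

definition qcos :: "('k, 'r, 'd) rmodule_scheme \<Rightarrow> 'k set \<Rightarrow> 'k \<Rightarrow> 'k set" where
  "qcos K U k = {x \<in> carrier K. x \<ominus>\<^bsub>K\<^esub> k \<in> U}"

definition quot :: "('k, 'r, 'd) rmodule_scheme \<Rightarrow> 'k set \<Rightarrow> ('k set, 'r) rmodule" where
  "quot K U = \<lparr>carrier = qcos K U ` carrier K, mult = (\<lambda>a b. undefined), one = undefined,
     zero = qcos K U \<zero>\<^bsub>K\<^esub>,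
     add = (\<lambda>C D. qcos K U ((SOME x. x \<in> C) \<oplus>\<^bsub>K\<^esub> (SOME x. x \<in> D))),
     rsmult = (\<lambda>C r. qcos K U ((SOME x. x \<in> C) \<odot>\<^bsub>K\<^esub> r))\<rparr>"

lemma qcos_eq:
  assumes K: "right_module R K" and U: "submod R U K" and a: "a \<in> carrier K" and b: "b \<in> carrier K"
  shows "qcos K U a = qcos K U b \<longleftrightarrow> a \<ominus>\<^bsub>K\<^esub> b \<in> U"
proof -
  have G: "abelian_group K" using K rm_ag by blast
  have self: "a \<in> qcos K U a" using a ag_minus_self[OF G a] submodD(2)[OF U] by (simp add: qcos_def)
  show ?thesis
  proof
    assume "qcos K U a = qcos K U b" then show "a \<ominus>\<^bsub>K\<^esub> b \<in> U" using self by (simp add: qcos_def)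
  next
    assume ab: "a \<ominus>\<^bsub>K\<^esub> b \<in> U"
    have ba: "b \<ominus>\<^bsub>K\<^esub> a \<in> U" using ag_minus_swap[OF G b a] submodD(4)[OF U ab] by simp
    have "x \<in> qcos K U a \<longleftrightarrow> x \<in> qcos K U b" for x
    proof (cases "x \<in> carrier K")
      case True
      then show ?thesis
        using ag_minus_trans[OF G True a b] ag_minus_trans[OF G True b a] submodD(3)[OF U] ab ba
        unfolding qcos_def by (metis (no_types, lifting) mem_Collect_eq)
    qed (simp add: qcos_def)
    then show "qcos K U a = qcos K U b" by blast
  qed
qed

lemma qcos_rep:
  assumes K: "right_module R K" and U: "submod R U K" and a: "a \<in> carrier K"
  shows "(SOME x. x \<in> qcos K U a) \<in> carrier K" "qcos K U (SOME x. x \<in> qcos K U a) = qcos K U a"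
proof -
  have G: "abelian_group K" using K rm_ag by blast
  have self: "a \<in> qcos K U a" using a ag_minus_self[OF G a] submodD(2)[OF U] by (simp add: qcos_def)
  then have s: "(SOME x. x \<in> qcos K U a) \<in> qcos K U a" by (rule someI)
  then show "(SOME x. x \<in> qcos K U a) \<in> carrier K" by (simp add: qcos_def)
  then show "qcos K U (SOME x. x \<in> qcos K U a) = qcos K U a"
    using qcos_eq[OF K U _ a] s by (simp add: qcos_def)
qed

lemma quot_props:
  assumes K: "right_module R K" and U: "submod R U K"
  shows "right_module R (quot K U)" "qcos K U \<in> rmod_epi R K (quot K U)"
proof -
  have G: "abelian_group K" using K rm_ag by blast
  interpret K: abelian_group K by fact
  have qadd: "qcos K U (a \<oplus>\<^bsub>K\<^esub> b) = qcos K U a \<oplus>\<^bsub>quot K U\<^esub> qcos K U b"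
    if a: "a \<in> carrier K" and b: "b \<in> carrier K" for a b
  proof -
    let ?a = "SOME x. x \<in> qcos K U a" and ?b = "SOME x. x \<in> qcos K U b"
    have c: "?a \<in> carrier K" "?b \<in> carrier K" using qcos_rep[OF K U] a b by auto
    have "a \<ominus>\<^bsub>K\<^esub> ?a \<in> U" "b \<ominus>\<^bsub>K\<^esub> ?b \<in> U"
      using qcos_rep(2)[OF K U a] qcos_rep(2)[OF K U b] qcos_eq[OF K U] a b c by metis+
    then have "(a \<oplus>\<^bsub>K\<^esub> b) \<ominus>\<^bsub>K\<^esub> (?a \<oplus>\<^bsub>K\<^esub> ?b) \<in> U"
      using ag_minus_add[OF G a b c] submodD(3)[OF U] by simp
    then have "qcos K U (a \<oplus>\<^bsub>K\<^esub> b) = qcos K U (?a \<oplus>\<^bsub>K\<^esub> ?b)"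
      using qcos_eq[OF K U] a b c by simp
    then show ?thesis by (simp add: quot_def)
  qed
  have qsm: "qcos K U (a \<odot>\<^bsub>K\<^esub> r) = qcos K U a \<odot>\<^bsub>quot K U\<^esub> r"
    if a: "a \<in> carrier K" and r: "r \<in> carrier R" for a r
  proof -
    let ?a = "SOME x. x \<in> qcos K U a"
    have c: "?a \<in> carrier K" using qcos_rep[OF K U] a by auto
    have "a \<ominus>\<^bsub>K\<^esub> ?a \<in> U"
      using qcos_rep(2)[OF K U a] qcos_eq[OF K U] a c by metis
    then have "(a \<odot>\<^bsub>K\<^esub> r) \<ominus>\<^bsub>K\<^esub> (?a \<odot>\<^bsub>K\<^esub> r) \<in> U"
      using rm_minus_smult[OF K r a c] submodD(5)[OF U] r by metis
    then have "qcos K U (a \<odot>\<^bsub>K\<^esub> r) = qcos K U (?a \<odot>\<^bsub>K\<^esub> r)"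
      using qcos_eq[OF K U] a c rm_closed[OF K] r by simp
    then show ?thesis by (simp add: quot_def)
  qed
  show M: "right_module R (quot K U)"
    by (rule epi_module[OF K, of "qcos K U"]) (auto simp: qadd qsm, auto simp: quot_def)
  show "qcos K U \<in> rmod_epi R K (quot K U)"
    unfolding rmod_epi_def
    by (auto intro!: homI simp: qadd qsm) (auto simp: quot_def)
qed

lemma qcos_zero:
  assumes K: "right_module R K" and U: "submod R U K" and u: "u \<in> U"
  shows "qcos K U u = \<zero>\<^bsub>quot K U\<^esub>"
proof -
  have G: "abelian_group K" using K rm_ag by blast
  interpret abelian_group K by fact
  have m0: "\<ominus>\<^bsub>K\<^esub> \<zero>\<^bsub>K\<^esub> = \<zero>\<^bsub>K\<^esub>" using minus_equality[of "\<zero>\<^bsub>K\<^esub>" "\<zero>\<^bsub>K\<^esub>"] by simp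
  have "u \<in> carrier K" using submodD(1)[OF U] u by auto
  then show ?thesis using qcos_eq[OF K U \<open>u \<in> carrier K\<close> zero_closed] u
      ag_minus_self[OF G]
    by (simp add: quot_def a_minus_def m0)
qed



lemma P_carrier: "v \<in> carrier (dsum_pow M n) \<longleftrightarrow> (\<forall>i<n. v i \<in> carrier M) \<and> (\<forall>i. n \<le> i \<longrightarrow> v i = \<zero>\<^bsub>M\<^esub>)"
  by (simp add: dsum_pow_def)
lemma P_add [simp]: "v \<oplus>\<^bsub>dsum_pow M n\<^esub> w = (\<lambda>i. v i \<oplus>\<^bsub>M\<^esub> w i)"
  by (simp add: dsum_pow_def)
lemma P_zero [simp]: "\<zero>\<^bsub>dsum_pow M n\<^esub> = (\<lambda>i. \<zero>\<^bsub>M\<^esub>)"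
  by (simp add: dsum_pow_def)
lemma P_smult [simp]: "v \<odot>\<^bsub>dsum_pow M n\<^esub> r = (\<lambda>i. if i < n then v i \<odot>\<^bsub>M\<^esub> r else \<zero>\<^bsub>M\<^esub>)"
  by (simp add: dsum_pow_def)

lemma P_in: "v \<in> carrier (dsum_pow M n) \<Longrightarrow> i < n \<Longrightarrow> v i \<in> carrier M"
  by (simp add: P_carrier)
lemma P_out: "v \<in> carrier (dsum_pow M n) \<Longrightarrow> n \<le> i \<Longrightarrow> v i = \<zero>\<^bsub>M\<^esub>"
  by (simp add: P_carrier)
lemma P_inI: "(\<And>i. i < n \<Longrightarrow> v i \<in> carrier M) \<Longrightarrow> (\<And>i. n \<le> i \<Longrightarrow> v i = \<zero>\<^bsub>M\<^esub>) \<Longrightarrow> v \<in> carrier (dsum_pow M n)"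
  by (simp add: P_carrier)

lemma P_module:
  assumes M: "right_module R M"
  shows "right_module R (dsum_pow M n)"
proof -
  interpret abelian_group M using M rm_ag by blast
  have m0: "\<ominus>\<^bsub>M\<^esub> \<zero>\<^bsub>M\<^esub> = \<zero>\<^bsub>M\<^esub>" using minus_equality[of "\<zero>\<^bsub>M\<^esub>" "\<zero>\<^bsub>M\<^esub>"] by simp
  let ?P = "dsum_pow M n"
  have ag: "abelian_group ?P"
  proof (rule abelian_groupI)
    fix x y assume "x \<in> carrier ?P" "y \<in> carrier ?P"
    then show "x \<oplus>\<^bsub>?P\<^esub> y \<in> carrier ?P" by (auto simp: P_carrier)
  next
    show "\<zero>\<^bsub>?P\<^esub> \<in> carrier ?P" by (auto simp: P_carrier)
  next
    fix x y z assume "x \<in> carrier ?P" "y \<in> carrier ?P" "z \<in> carrier ?P"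
    then show "(x \<oplus>\<^bsub>?P\<^esub> y) \<oplus>\<^bsub>?P\<^esub> z = x \<oplus>\<^bsub>?P\<^esub> (y \<oplus>\<^bsub>?P\<^esub> z)"
      by (auto simp: P_carrier a_assoc intro!: ext) (metis a_assoc not_le zero_closed l_zero)
  next
    fix x y assume "x \<in> carrier ?P" "y \<in> carrier ?P"
    then show "x \<oplus>\<^bsub>?P\<^esub> y = y \<oplus>\<^bsub>?P\<^esub> x"
      by (auto simp: P_carrier intro!: ext) (metis a_comm not_le zero_closed)
  next
    fix x assume "x \<in> carrier ?P"
    then show "\<zero>\<^bsub>?P\<^esub> \<oplus>\<^bsub>?P\<^esub> x = x"
      by (auto simp: P_carrier intro!: ext) (metis l_zero not_le zero_closed)
  next
    fix x assume x: "x \<in> carrier ?P"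
    let ?y = "\<lambda>i. \<ominus>\<^bsub>M\<^esub> x i"
    have "?y \<in> carrier ?P" using x by (auto simp: P_carrier m0)
    moreover have "?y \<oplus>\<^bsub>?P\<^esub> x = \<zero>\<^bsub>?P\<^esub>"
      using x by (auto simp: P_carrier l_neg m0 intro!: ext) (metis l_neg not_le zero_closed m0)
    ultimately show "\<exists>y\<in>carrier ?P. y \<oplus>\<^bsub>?P\<^esub> x = \<zero>\<^bsub>?P\<^esub>" by blast
  qed
  have z: "\<And>r. r \<in> carrier R \<Longrightarrow> \<zero>\<^bsub>M\<^esub> \<odot>\<^bsub>M\<^esub> r = \<zero>\<^bsub>M\<^esub>" using rm_zero_smult[OF M] by blast
  show ?thesis unfolding right_module_def
  proof (intro conjI ballI)
    show "ring R" using M rm_ring by blast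
    show "abelian_group ?P" by (fact ag)
  next
    fix x r assume "x \<in> carrier ?P" "r \<in> carrier R"
    then show "x \<odot>\<^bsub>?P\<^esub> r \<in> carrier ?P" by (auto simp: P_carrier rm_closed[OF M])
  next
    fix x y r assume "x \<in> carrier ?P" "y \<in> carrier ?P" and r: "r \<in> carrier R"
    then show "(x \<oplus>\<^bsub>?P\<^esub> y) \<odot>\<^bsub>?P\<^esub> r = (x \<odot>\<^bsub>?P\<^esub> r) \<oplus>\<^bsub>?P\<^esub> (y \<odot>\<^bsub>?P\<^esub> r)"
      by (auto simp: P_carrier rm_distl[OF M] intro!: ext)
  next
    fix x r s assume x: "x \<in> carrier ?P" and r: "r \<in> carrier R" "s \<in> carrier R"
    then show "x \<odot>\<^bsub>?P\<^esub> (r \<oplus>\<^bsub>R\<^esub> s) = (x \<odot>\<^bsub>?P\<^esub> r) \<oplus>\<^bsub>?P\<^esub> (x \<odot>\<^bsub>?P\<^esub> s)"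
      by (auto simp: P_carrier rm_distr[OF M] intro!: ext)
  next
    fix x r s assume x: "x \<in> carrier ?P" and r: "r \<in> carrier R" "s \<in> carrier R"
    then show "x \<odot>\<^bsub>?P\<^esub> (r \<otimes>\<^bsub>R\<^esub> s) = (x \<odot>\<^bsub>?P\<^esub> r) \<odot>\<^bsub>?P\<^esub> s"
      by (auto simp: P_carrier rm_assoc[OF M] intro!: ext)
  next
    fix x assume x: "x \<in> carrier ?P"
    then show "x \<odot>\<^bsub>?P\<^esub> \<one>\<^bsub>R\<^esub> = x"
      by (auto simp: P_carrier rm_one[OF M] intro!: ext)
  qed
qed

lemma subm_module:
  assumes X: "right_module R X" and N: "submod R N X"
  shows "right_module R (subm X N)"
proof -
  interpret abelian_group X using X rm_ag by blast
  have sub: "N \<subseteq> carrier X" using submodD(1)[OF N] .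
  have ag: "abelian_group (subm X N)"
  proof (rule abelian_groupI)
    fix x y assume "x \<in> carrier (subm X N)" "y \<in> carrier (subm X N)"
    then show "x \<oplus>\<^bsub>subm X N\<^esub> y \<in> carrier (subm X N)" using submodD(3)[OF N] by simp
  next
    show "\<zero>\<^bsub>subm X N\<^esub> \<in> carrier (subm X N)" using submodD(2)[OF N] by simp
  next
    fix x y z assume "x \<in> carrier (subm X N)" "y \<in> carrier (subm X N)" "z \<in> carrier (subm X N)"
    then show "(x \<oplus>\<^bsub>subm X N\<^esub> y) \<oplus>\<^bsub>subm X N\<^esub> z = x \<oplus>\<^bsub>subm X N\<^esub> (y \<oplus>\<^bsub>subm X N\<^esub> z)"
      using sub by (simp add: a_assoc subsetD)
  next
    fix x y assume "x \<in> carrier (subm X N)" "y \<in> carrier (subm X N)"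
    then show "x \<oplus>\<^bsub>subm X N\<^esub> y = y \<oplus>\<^bsub>subm X N\<^esub> x" using sub by (simp add: a_comm subsetD)
  next
    fix x assume "x \<in> carrier (subm X N)"
    then show "\<zero>\<^bsub>subm X N\<^esub> \<oplus>\<^bsub>subm X N\<^esub> x = x" using sub by (simp add: subsetD)
  next
    fix x assume "x \<in> carrier (subm X N)"
    then show "\<exists>y\<in>carrier (subm X N). y \<oplus>\<^bsub>subm X N\<^esub> x = \<zero>\<^bsub>subm X N\<^esub>"
      using sub submodD(4)[OF N] l_neg by (simp add: subsetD) (metis subsetD)
  qed
  show ?thesis unfolding right_module_def
  proof (intro conjI ballI)
    show "ring R" using X rm_ring by blast
    show "abelian_group (subm X N)" by (fact ag)
  qed (use sub submodD(5)[OF N] X in \<open>auto simp: subsetD rm_distl rm_distr rm_assoc rm_one\<close>)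
qed

definition trunc :: "('a, 'r, 'd) rmodule_scheme \<Rightarrow> nat \<Rightarrow> (nat \<Rightarrow> 'a) \<Rightarrow> nat \<Rightarrow> 'a" where
  "trunc M m v = (\<lambda>i. if i < m then v i else \<zero>\<^bsub>M\<^esub>)"
definition emb :: "('a, 'r, 'd) rmodule_scheme \<Rightarrow> nat \<Rightarrow> 'a \<Rightarrow> nat \<Rightarrow> 'a" where
  "emb M k x = (\<lambda>j. if j = k then x else \<zero>\<^bsub>M\<^esub>)"

lemma P_smult_eq:
  assumes M: "right_module R M" and mk: "m \<le> k" and v: "v \<in> carrier (dsum_pow M m)" and r: "r \<in> carrier R"
  shows "v \<odot>\<^bsub>dsum_pow M k\<^esub> r = v \<odot>\<^bsub>dsum_pow M m\<^esub> r"
  using v r mk by (auto simp: P_carrier rm_zero_smult[OF M] intro!: ext)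

lemma incl_hom:
  assumes M: "right_module R M" and mk: "m \<le> k"
  shows "(\<lambda>v. v) \<in> rmod_hom R (dsum_pow M m) (dsum_pow M k)"
    "carrier (dsum_pow M m) \<subseteq> carrier (dsum_pow M k)"
proof -
  interpret abelian_group M using M rm_ag by blast
  show "carrier (dsum_pow M m) \<subseteq> carrier (dsum_pow M k)"
    using mk by (auto simp: P_carrier) (metis not_le zero_closed)
  then show "(\<lambda>v. v) \<in> rmod_hom R (dsum_pow M m) (dsum_pow M k)"
    by (intro homI) (auto simp del: P_smult simp: P_smult_eq[OF M mk])
qed

lemma trunc_hom:
  assumes M: "right_module R M" and mk: "m \<le> k"
  shows "trunc M m \<in> rmod_hom R (dsum_pow M k) (dsum_pow M m)"
proof -
  interpret abelian_group M using M rm_ag by blast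
  show ?thesis using mk by (intro homI) (auto simp: P_carrier trunc_def rm_zero_smult[OF M] intro!: ext)
qed

lemma trunc_id: "v \<in> carrier (dsum_pow M m) \<Longrightarrow> trunc M m v = v"
  by (auto simp: P_carrier trunc_def intro!: ext)

lemma ev_hom:
  assumes "i < k"
  shows "(\<lambda>v. v i) \<in> rmod_hom R (dsum_pow M k) M"
  using assms by (intro homI) (auto simp: P_carrier)

lemma emb_hom:
  assumes M: "right_module R M" and "i < k"
  shows "emb M i \<in> rmod_hom R M (dsum_pow M k)"
proof -
  interpret abelian_group M using M rm_ag by blast
  show ?thesis using assms by (intro homI) (auto simp: P_carrier emb_def rm_zero_smult[OF M] intro!: ext)
qed

lemma decomp:
  assumes M: "right_module R M" and v: "v \<in> carrier (dsum_pow M (Suc m))"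
  shows "trunc M m v \<oplus>\<^bsub>dsum_pow M (Suc m)\<^esub> emb M m (v m) = v"
proof -
  interpret abelian_group M using M rm_ag by blast
  show ?thesis using v by (auto simp: P_carrier trunc_def emb_def intro!: ext)
qed

lemma P0_carrier: "carrier (dsum_pow M 0) = {\<zero>\<^bsub>dsum_pow M 0\<^esub>}"
  by (auto simp: P_carrier)

lemma sum_proj:
  fixes R :: "('r, 'c) ring_scheme" and M :: "('a, 'r, 'd) rmodule_scheme"
  assumes M: "right_module R M" and QP: "rel_projective R M M"
  shows "rel_projective R (dsum_pow M m) M"
proof (induction m)
  interpret abelian_group M using M rm_ag by blast
  case 0
  show ?case unfolding rel_projective_def
  proof (intro allI impI)
    fix K :: "('a, 'r) rmodule" and g f
    assume a: "right_module R K \<and> g \<in> rmod_epi R M K \<and> f \<in> rmod_hom R (dsum_pow M 0) K"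
    have gh: "g \<in> rmod_hom R M K" using a by (simp add: rmod_epi_def)
    have h: "(\<lambda>v. \<zero>\<^bsub>M\<^esub>) \<in> rmod_hom R (dsum_pow M 0) M"
      by (intro homI) (auto simp: rm_zero_smult[OF M])
    have "\<forall>x\<in>carrier (dsum_pow M 0). g \<zero>\<^bsub>M\<^esub> = f x"
      using hom_zero[OF gh abelian_group_axioms rm_ag[of R K]] hom_zero[of f R "dsum_pow M 0" K] a
        P0_carrier[of M] rm_ag[of R K] rm_ag[OF P_module[OF M]] by auto
    then show "\<exists>h\<in>rmod_hom R (dsum_pow M 0) M. \<forall>x\<in>carrier (dsum_pow M 0). g (h x) = f x"
      using h by (intro bexI[of _ "\<lambda>v. \<zero>\<^bsub>M\<^esub>"]) auto
  qed
next
  interpret abelian_group M using M rm_ag by blast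
  case (Suc m)
  show ?case unfolding rel_projective_def
  proof (intro allI impI)
    fix K :: "('a, 'r) rmodule" and g f
    assume a: "right_module R K \<and> g \<in> rmod_epi R M K \<and> f \<in> rmod_hom R (dsum_pow M (Suc m)) K"
    have K: "right_module R K" and gh: "g \<in> rmod_hom R M K" and ge: "g \<in> rmod_epi R M K"
      and f: "f \<in> rmod_hom R (dsum_pow M (Suc m)) K"
      using a by (auto simp: rmod_epi_def)
    have f1: "f \<in> rmod_hom R (dsum_pow M m) K"
      using hom_comp[OF incl_hom(1)[OF M, of m "Suc m"] f] by simp
    obtain h1 where h1: "h1 \<in> rmod_hom R (dsum_pow M m) M" "\<forall>x\<in>carrier (dsum_pow M m). g (h1 x) = f x"
      using Suc.IH K ge f1 unfolding rel_projective_def by blast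
    have f2: "(\<lambda>x. f (emb M m x)) \<in> rmod_hom R M K" using hom_comp[OF emb_hom[OF M, of m "Suc m"] f] by simp
    obtain h2 where h2: "h2 \<in> rmod_hom R M M" "\<forall>x\<in>carrier M. g (h2 x) = f (emb M m x)"
      using QP K ge f2 unfolding rel_projective_def by blast
    let ?h = "\<lambda>v. h1 (trunc M m v) \<oplus>\<^bsub>M\<^esub> h2 (v m)"
    have c1: "(\<lambda>v. h1 (trunc M m v)) \<in> rmod_hom R (dsum_pow M (Suc m)) M"
      using hom_comp[OF trunc_hom[OF M le_SucI[OF le_refl]] h1(1)] .
    have c2: "(\<lambda>v. h2 (v m)) \<in> rmod_hom R (dsum_pow M (Suc m)) M"
      using hom_comp[OF ev_hom[OF lessI] h2(1)] .
    have hh: "?h \<in> rmod_hom R (dsum_pow M (Suc m)) M" using hom_sum[OF c1 c2 M] .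
    have gv: "g (?h v) = f v" if v: "v \<in> carrier (dsum_pow M (Suc m))" for v
    proof -
      have t: "trunc M m v \<in> carrier (dsum_pow M m)"
        using hom_closed[OF trunc_hom[OF M, of m "Suc m"] v] by simp
      have vm: "v m \<in> carrier M" using v by (simp add: P_carrier)
      have "g (?h v) = g (h1 (trunc M m v)) \<oplus>\<^bsub>K\<^esub> g (h2 (v m))"
        using hom_add[OF gh hom_closed[OF h1(1) t] hom_closed[OF h2(1) vm]] .
      also have "\<dots> = f (trunc M m v) \<oplus>\<^bsub>K\<^esub> f (emb M m (v m))" using h1(2) h2(2) t vm by simp
      also have "\<dots> = f (trunc M m v \<oplus>\<^bsub>dsum_pow M (Suc m)\<^esub> emb M m (v m))"
        using hom_add[OF f hom_closed[OF incl_hom(1)[OF M, of m "Suc m"] t]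
            hom_closed[OF emb_hom[OF M, of m "Suc m"] vm]] by simp
      also have "\<dots> = f v" using decomp[OF M v] by simp
      finally show ?thesis .
    qed
    have "\<forall>x\<in>carrier (dsum_pow M (Suc m)). g (?h x) = f x" using gv by blast
    with hh show "\<exists>h\<in>rmod_hom R (dsum_pow M (Suc m)) M. \<forall>x\<in>carrier (dsum_pow M (Suc m)). g (h x) = f x"
      by (intro bexI[of _ "?h"]) auto
  qed
qed



lemma img_submod:
  assumes phi: "\<phi> \<in> rmod_hom R X K" and X: "right_module R X" and K: "right_module R K"
  shows "submod R (\<phi> ` carrier X) K"
proof -
  interpret X: abelian_group X using X rm_ag by blast
  interpret K: abelian_group K using K rm_ag by blast
  show ?thesis unfolding submod_def
  proof (intro conjI ballI)
    show "\<phi> ` carrier X \<subseteq> carrier K" using hom_closed[OF phi] by blast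
    show "\<zero>\<^bsub>K\<^esub> \<in> \<phi> ` carrier X" using hom_zero[OF phi X.abelian_group_axioms K.abelian_group_axioms]
      X.zero_closed by (metis image_eqI)
  next
    fix x y assume "x \<in> \<phi> ` carrier X" "y \<in> \<phi> ` carrier X"
    then obtain a b where "a \<in> carrier X" "b \<in> carrier X" "x = \<phi> a" "y = \<phi> b" by blast
    then show "x \<oplus>\<^bsub>K\<^esub> y \<in> \<phi> ` carrier X" using hom_add[OF phi] X.a_closed by (metis image_eqI)
  next
    fix x assume "x \<in> \<phi> ` carrier X"
    then obtain a where "a \<in> carrier X" "x = \<phi> a" by blast
    then show "\<ominus>\<^bsub>K\<^esub> x \<in> \<phi> ` carrier X"
      using hom_inv[OF phi X.abelian_group_axioms K.abelian_group_axioms] X.a_inv_closed by (metis image_eqI)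
  next
    fix x r assume "x \<in> \<phi> ` carrier X" "r \<in> carrier R"
    then obtain a where "a \<in> carrier X" "x = \<phi> a" by blast
    then show "x \<odot>\<^bsub>K\<^esub> r \<in> \<phi> ` carrier X"
      using hom_smult[OF phi] rm_closed[OF X] \<open>r \<in> carrier R\<close> by (metis image_eqI)
  qed
qed

lemma key_lemma:
  fixes R :: "('r, 'c) ring_scheme" and M :: "('a, 'r, 'd) rmodule_scheme"
  assumes M: "right_module R M" and YP: "rel_projective R Y M"
  shows "rel_projective R Y (dsum_pow M m)"
proof (induction m)
  interpret abelian_group M using M rm_ag by blast
  case 0
  show ?case unfolding rel_projective_def
  proof (intro allI impI)
    fix K :: "(nat \<Rightarrow> 'a, 'r) rmodule" and g f
    assume a: "right_module R K \<and> g \<in> rmod_epi R (dsum_pow M 0) K \<and> f \<in> rmod_hom R Y K"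
    have K: "right_module R K" and gh: "g \<in> rmod_hom R (dsum_pow M 0) K" and ge: "g ` carrier (dsum_pow M 0) = carrier K"
      and f: "f \<in> rmod_hom R Y K" using a by (auto simp: rmod_epi_def)
    have h: "(\<lambda>y. \<zero>\<^bsub>dsum_pow M 0\<^esub>) \<in> rmod_hom R Y (dsum_pow M 0)"
      by (intro homI) (auto simp: P_carrier rm_zero_smult[OF M])
    have "\<forall>x\<in>carrier Y. g \<zero>\<^bsub>dsum_pow M 0\<^esub> = f x"
      using ge P0_carrier[of M] hom_closed[OF f] by (simp) (metis singletonD)
    then show "\<exists>h\<in>rmod_hom R Y (dsum_pow M 0). \<forall>x\<in>carrier Y. g (h x) = f x"
      using h by (intro bexI[of _ "\<lambda>y. \<zero>\<^bsub>dsum_pow M 0\<^esub>"]) auto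
  qed
next
  interpret abelian_group M using M rm_ag by blast
  case (Suc m)
  show ?case unfolding rel_projective_def
  proof (intro allI impI)
    fix K :: "(nat \<Rightarrow> 'a, 'r) rmodule" and g f
    assume a: "right_module R K \<and> g \<in> rmod_epi R (dsum_pow M (Suc m)) K \<and> f \<in> rmod_hom R Y K"
    have K: "right_module R K" and gh: "g \<in> rmod_hom R (dsum_pow M (Suc m)) K"
      and ge: "g ` carrier (dsum_pow M (Suc m)) = carrier K"
      and f: "f \<in> rmod_hom R Y K" using a by (auto simp: rmod_epi_def)
    interpret K: abelian_group K using K rm_ag by blast
    have Ps: "right_module R (dsum_pow M (Suc m))" using P_module[OF M] .
    have Pm: "right_module R (dsum_pow M m)" using P_module[OF M] .
    define gA where "gA = (\<lambda>x. g (emb M m x))"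
    have gAh: "gA \<in> rmod_hom R M K" unfolding gA_def using hom_comp[OF emb_hom[OF M lessI] gh] .
    define U where "U = gA ` carrier M"
    have U: "submod R U K" unfolding U_def using img_submod[OF gAh M K] .
    have Usub: "U \<subseteq> carrier K" using submodD(1)[OF U] .
    define Q where "Q = quot K U"
    define \<pi> where "\<pi> = qcos K U"
    have Q: "right_module R Q" and pie: "\<pi> \<in> rmod_epi R K Q"
      using quot_props[OF K U] unfolding Q_def \<pi>_def by auto
    have pih: "\<pi> \<in> rmod_hom R K Q" using pie by (simp add: rmod_epi_def)
    interpret Q: abelian_group Q using Q rm_ag by blast
    have incl: "(\<lambda>v. v) \<in> rmod_hom R (dsum_pow M m) (dsum_pow M (Suc m))"
      using incl_hom(1)[OF M le_SucI[OF le_refl]] .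
    have inclc: "carrier (dsum_pow M m) \<subseteq> carrier (dsum_pow M (Suc m))"
      using incl_hom(2)[OF M le_SucI[OF le_refl]] .
    define gB where "gB = (\<lambda>v. \<pi> (g v))"
    have gBh: "gB \<in> rmod_hom R (dsum_pow M m) Q"
      unfolding gB_def using hom_comp[OF incl hom_comp[OF gh pih]] .
    have gBs: "gB ` carrier (dsum_pow M m) = carrier Q"
    proof
      show "gB ` carrier (dsum_pow M m) \<subseteq> carrier Q" using hom_closed[OF gBh] by blast
    next
      show "carrier Q \<subseteq> gB ` carrier (dsum_pow M m)"
      proof
        fix C assume "C \<in> carrier Q"
        then obtain k where k: "k \<in> carrier K" "C = \<pi> k" using pie by (auto simp: rmod_epi_def)
        then obtain v where v: "v \<in> carrier (dsum_pow M (Suc m))" "k = g v" using ge by blast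
        have t: "trunc M m v \<in> carrier (dsum_pow M m)"
          using hom_closed[OF trunc_hom[OF M le_SucI[OF le_refl]] v(1)] .
        have vm: "v m \<in> carrier M" using v(1) by (simp add: P_carrier)
        have "g v = g (trunc M m v) \<oplus>\<^bsub>K\<^esub> gA (v m)"
          unfolding gA_def using hom_add[OF gh subsetD[OF inclc t] hom_closed[OF emb_hom[OF M lessI] vm]]
            decomp[OF M v(1)] by simp
        then have "\<pi> (g v) = \<pi> (g (trunc M m v)) \<oplus>\<^bsub>Q\<^esub> \<pi> (gA (v m))"
          using hom_add[OF pih] hom_closed[OF gh subsetD[OF inclc t]] hom_closed[OF gAh vm] by simp
        also have "\<pi> (gA (v m)) = \<zero>\<^bsub>Q\<^esub>" unfolding \<pi>_def Q_def
          using qcos_zero[OF K U] vm U_def by blast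
        finally have "\<pi> (g v) = gB (trunc M m v)"
          unfolding gB_def using hom_closed[OF pih hom_closed[OF gh subsetD[OF inclc t]]] by simp
        then show "C \<in> gB ` carrier (dsum_pow M m)" using k v t by blast
      qed
    qed
    have gBe: "gB \<in> rmod_epi R (dsum_pow M m) Q" using gBh gBs by (simp add: rmod_epi_def)
    have fB: "(\<lambda>y. \<pi> (f y)) \<in> rmod_hom R Y Q" using hom_comp[OF f pih] .
    obtain hB where hB: "hB \<in> rmod_hom R Y (dsum_pow M m)" "\<forall>y\<in>carrier Y. gB (hB y) = \<pi> (f y)"
      using rel_proj_any[OF Suc.IH Q gBe fB] by blast
    have ghB: "g (hB y) \<in> carrier K" if "y \<in> carrier Y" for y
      using hom_closed[OF gh subsetD[OF inclc hom_closed[OF hB(1) that]]] .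
    have inU: "f y \<ominus>\<^bsub>K\<^esub> g (hB y) \<in> U" if y: "y \<in> carrier Y" for y
    proof -
      have "qcos K U (f y) = qcos K U (g (hB y))" using hB(2) y unfolding gB_def \<pi>_def by simp
      then show ?thesis using qcos_eq[OF K U hom_closed[OF f y] ghB[OF y]] by simp
    qed
    define KU where "KU = subm K U"
    have KU: "right_module R KU" unfolding KU_def using subm_module[OF K U] .
    have gAe: "gA \<in> rmod_epi R M KU"
      unfolding rmod_epi_def KU_def
      using gAh U_def by (auto simp: rmod_hom_def)
    define fA where "fA = (\<lambda>y. f y \<ominus>\<^bsub>K\<^esub> g (hB y))"
    have fAh: "fA \<in> rmod_hom R Y KU"
    proof (rule homI)
      fix y assume "y \<in> carrier Y" then show "fA y \<in> carrier KU" using inU unfolding fA_def KU_def by simp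
    next
      fix x y assume xy: "x \<in> carrier Y" "y \<in> carrier Y"
      have "g (hB (x \<oplus>\<^bsub>Y\<^esub> y)) = g (hB x) \<oplus>\<^bsub>K\<^esub> g (hB y)"
        using hom_add[OF hB(1) xy] hom_add[OF gh subsetD[OF inclc hom_closed[OF hB(1) xy(1)]]
           subsetD[OF inclc hom_closed[OF hB(1) xy(2)]]] by simp
      then show "fA (x \<oplus>\<^bsub>Y\<^esub> y) = fA x \<oplus>\<^bsub>KU\<^esub> fA y"
        unfolding fA_def KU_def using hom_add[OF f xy] ag_minus_add[OF K.abelian_group_axioms
          hom_closed[OF f xy(1)] hom_closed[OF f xy(2)] ghB[OF xy(1)] ghB[OF xy(2)]] by simp
    next
      fix y r assume yr: "y \<in> carrier Y" "r \<in> carrier R"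
      have hc: "hB y \<in> carrier (dsum_pow M m)" using hom_closed[OF hB(1) yr(1)] .
      have "g (hB (y \<odot>\<^bsub>Y\<^esub> r)) = g (hB y) \<odot>\<^bsub>K\<^esub> r"
        using hom_smult[OF hB(1) yr] P_smult_eq[OF M le_SucI[OF le_refl] hc yr(2)]
          hom_smult[OF gh subsetD[OF inclc hc] yr(2)] by simp
      then show "fA (y \<odot>\<^bsub>Y\<^esub> r) = fA y \<odot>\<^bsub>KU\<^esub> r"
        unfolding fA_def KU_def using hom_smult[OF f yr] rm_minus_smult[OF K yr(2) hom_closed[OF f yr(1)] ghB[OF yr(1)]]
        by simp
    qed
    obtain hA where hA: "hA \<in> rmod_hom R Y M" "\<forall>y\<in>carrier Y. gA (hA y) = fA y"
      using rel_proj_any[OF YP KU gAe fAh] by blast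
    define h where "h = (\<lambda>y. hB y \<oplus>\<^bsub>dsum_pow M (Suc m)\<^esub> emb M m (hA y))"
    have hh: "h \<in> rmod_hom R Y (dsum_pow M (Suc m))"
      unfolding h_def using hom_sum[OF hom_comp[OF hB(1) incl] hom_comp[OF hA(1) emb_hom[OF M lessI]] Ps] .
    have "g (h y) = f y" if y: "y \<in> carrier Y" for y
    proof -
      have "g (h y) = g (hB y) \<oplus>\<^bsub>K\<^esub> gA (hA y)"
        unfolding h_def gA_def
        using hom_add[OF gh subsetD[OF inclc hom_closed[OF hB(1) y]] hom_closed[OF emb_hom[OF M lessI] hom_closed[OF hA(1) y]]] .
      also have "\<dots> = g (hB y) \<oplus>\<^bsub>K\<^esub> (f y \<ominus>\<^bsub>K\<^esub> g (hB y))" using hA(2) y unfolding fA_def by simp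
      also have "\<dots> = f y" using ag_add_minus_cancel[OF K.abelian_group_axioms hom_closed[OF f y] ghB[OF y]] .
      finally show ?thesis .
    qed
    then show "\<exists>h\<in>rmod_hom R Y (dsum_pow M (Suc m)). \<forall>x\<in>carrier Y. g (h x) = f x"
      using hh by (intro bexI[of _ h]) auto
  qed
qed



lemma subm_self [simp]: "subm X (carrier X) = X"
  by simp

lemma incl_sub: "submod R N X \<Longrightarrow> (\<lambda>x. x) \<in> rmod_hom R (subm X N) X"
  by (intro homI) (auto simp: submod_def)

lemma hom_into_subm:
  assumes "f \<in> rmod_hom R Y X" "\<And>y. y \<in> carrier Y \<Longrightarrow> f y \<in> N"
  shows "f \<in> rmod_hom R Y (subm X N)"
  using assms by (auto simp: rmod_hom_def)

lemma hom_from_subm: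
  assumes "f \<in> rmod_hom R X Y" "submod R N X"
  shows "f \<in> rmod_hom R (subm X N) Y"
  using hom_comp[OF incl_sub[OF assms(2)] assms(1)] by simp

lemma epi_comp:
  assumes "f \<in> rmod_epi R X Y" "g \<in> rmod_epi R Y Z"
  shows "(\<lambda>x. g (f x)) \<in> rmod_epi R X Z"
  using assms hom_comp unfolding rmod_epi_def by (auto simp: image_image[symmetric])

lemma preimage_submod:
  assumes t: "\<tau> \<in> rmod_hom R X Y" and X: "right_module R X" and Y: "right_module R Y" and N: "submod R N Y"
  shows "submod R {v \<in> carrier X. \<tau> v \<in> N} X"
proof -
  interpret X: abelian_group X using X rm_ag by blast
  interpret Y: abelian_group Y using Y rm_ag by blast
  show ?thesis unfolding submod_def
  proof (intro conjI ballI)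
    show "{v \<in> carrier X. \<tau> v \<in> N} \<subseteq> carrier X" by blast
    show "\<zero>\<^bsub>X\<^esub> \<in> {v \<in> carrier X. \<tau> v \<in> N}"
      using hom_zero[OF t X.abelian_group_axioms Y.abelian_group_axioms] submodD(2)[OF N] by simp
  next
    fix x y assume "x \<in> {v \<in> carrier X. \<tau> v \<in> N}" "y \<in> {v \<in> carrier X. \<tau> v \<in> N}"
    then show "x \<oplus>\<^bsub>X\<^esub> y \<in> {v \<in> carrier X. \<tau> v \<in> N}"
      using hom_add[OF t] submodD(3)[OF N] by simp
  next
    fix x assume "x \<in> {v \<in> carrier X. \<tau> v \<in> N}"
    then show "\<ominus>\<^bsub>X\<^esub> x \<in> {v \<in> carrier X. \<tau> v \<in> N}"
      using hom_inv[OF t X.abelian_group_axioms Y.abelian_group_axioms] submodD(4)[OF N] by simp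
  next
    fix x r assume "x \<in> {v \<in> carrier X. \<tau> v \<in> N}" "r \<in> carrier R"
    then show "x \<odot>\<^bsub>X\<^esub> r \<in> {v \<in> carrier X. \<tau> v \<in> N}"
      using hom_smult[OF t] submodD(5)[OF N] rm_closed[OF X] by simp
  qed
qed

lemma ker_submod:
  assumes t: "\<tau> \<in> rmod_hom R X Y" and X: "right_module R X" and Y: "right_module R Y"
  shows "submod R (rmod_ker X Y \<tau>) X"
proof -
  interpret Y: abelian_group Y using Y rm_ag by blast
  have "submod R {\<zero>\<^bsub>Y\<^esub>} Y" unfolding submod_def
    using rm_zero_smult[OF Y] Y.minus_equality[of "\<zero>\<^bsub>Y\<^esub>" "\<zero>\<^bsub>Y\<^esub>"] by auto
  from preimage_submod[OF t X Y this] show ?thesis by (simp add: rmod_ker_def)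
qed

lemma whole_summand:
  assumes X: "right_module R X"
  shows "direct_summand R (carrier X) X"
proof -
  interpret X: abelian_group X using X rm_ag by blast
  have s1: "submod R (carrier X) X" unfolding submod_def using rm_closed[OF X] by auto
  have s0: "submod R {\<zero>\<^bsub>X\<^esub>} X" unfolding submod_def
    using rm_zero_smult[OF X] X.minus_equality[of "\<zero>\<^bsub>X\<^esub>" "\<zero>\<^bsub>X\<^esub>"] by auto
  show ?thesis unfolding direct_summand_def
    using s1 s0 by (intro conjI exI[of _ "{\<zero>\<^bsub>X\<^esub>}"]) auto
qed

lemma ag_minus_zero_eq:
  assumes "abelian_group G" "a \<in> carrier G" "b \<in> carrier G" "a \<ominus>\<^bsub>G\<^esub> b = \<zero>\<^bsub>G\<^esub>"
  shows "a = b"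
proof -
  interpret abelian_group G by fact
  have "a = b \<oplus>\<^bsub>G\<^esub> (a \<ominus>\<^bsub>G\<^esub> b)" using ag_add_minus_cancel[OF assms(1-3)] by simp
  also have "\<dots> = b" using assms by simp
  finally show ?thesis .
qed

lemma summand_image:
  fixes M :: "('a, 'r, 'd) rmodule_scheme"
  assumes X: "right_module R X" and Y: "right_module R Y" and XP: "rel_projective R X M"
    and psi: "\<psi> \<in> rmod_epi R X Y" and C: "submod R C X"
    and CK: "rmod_ker X Y \<psi> \<inter> C = {\<zero>\<^bsub>X\<^esub>}"
    and dec: "\<forall>x\<in>carrier X. \<exists>a\<in>rmod_ker X Y \<psi>. \<exists>b\<in>C. x = a \<oplus>\<^bsub>X\<^esub> b"
  shows "rel_projective R Y M"
proof -
  interpret X: abelian_group X using X rm_ag by blast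
  interpret Y: abelian_group Y using Y rm_ag by blast
  have ph: "\<psi> \<in> rmod_hom R X Y" and ps: "\<psi> ` carrier X = carrier Y" using psi by (auto simp: rmod_epi_def)
  have Cs: "C \<subseteq> carrier X" using submodD(1)[OF C] .
  have uniq: "c1 = c2" if "c1 \<in> C" "c2 \<in> C" "\<psi> c1 = \<psi> c2" for c1 c2
  proof -
    have c: "c1 \<in> carrier X" "c2 \<in> carrier X" using that Cs by auto
    have "c1 \<ominus>\<^bsub>X\<^esub> c2 \<in> C" using that submodD(3,4)[OF C] by (simp add: a_minus_def)
    moreover have "\<psi> (c1 \<ominus>\<^bsub>X\<^esub> c2) = \<zero>\<^bsub>Y\<^esub>"
      using hom_minus[OF ph X.abelian_group_axioms Y.abelian_group_axioms c] that(3)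
        ag_minus_self[OF Y.abelian_group_axioms hom_closed[OF ph c(2)]] by simp
    ultimately have "c1 \<ominus>\<^bsub>X\<^esub> c2 \<in> rmod_ker X Y \<psi> \<inter> C" using c by (simp add: rmod_ker_def)
    then have "c1 \<ominus>\<^bsub>X\<^esub> c2 = \<zero>\<^bsub>X\<^esub>" using CK by blast
    then show ?thesis using ag_minus_zero_eq[OF X.abelian_group_axioms c] by simp
  qed
  have ex: "\<exists>c. c \<in> C \<and> \<psi> c = y" if y: "y \<in> carrier Y" for y
  proof -
    obtain x where x: "x \<in> carrier X" "y = \<psi> x" using ps y by blast
    obtain a b where ab: "a \<in> rmod_ker X Y \<psi>" "b \<in> C" "x = a \<oplus>\<^bsub>X\<^esub> b" using dec x by blast
    have "\<psi> x = \<psi> a \<oplus>\<^bsub>Y\<^esub> \<psi> b" using hom_add[OF ph] ab Cs by (auto simp: rmod_ker_def)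
    also have "\<dots> = \<psi> b" using ab Cs hom_closed[OF ph] by (auto simp: rmod_ker_def)
    finally have "\<psi> b = y" using x by simp
    then show ?thesis using ab(2) by blast
  qed
  define c where "c = (\<lambda>y. THE c. c \<in> C \<and> \<psi> c = y)"
  have cP: "c y \<in> C \<and> \<psi> (c y) = y" if "y \<in> carrier Y" for y
  proof -
    have "\<exists>!c. c \<in> C \<and> \<psi> c = y" using ex[OF that] uniq by blast
    then show ?thesis unfolding c_def by (rule theI')
  qed
  have cU: "c y = c'" if "y \<in> carrier Y" "c' \<in> C" "\<psi> c' = y" for y c'
    using uniq cP[OF that(1)] that by metis
  show ?thesis unfolding rel_projective_def
  proof (intro allI impI)
    fix K :: "('a, 'r) rmodule" and g f
    assume a: "right_module R K \<and> g \<in> rmod_epi R M K \<and> f \<in> rmod_hom R Y K"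
    have f: "f \<in> rmod_hom R Y K" using a by blast
    obtain h where h: "h \<in> rmod_hom R X M" "\<forall>x\<in>carrier X. g (h x) = f (\<psi> x)"
      using XP a hom_comp[OF ph f] unfolding rel_projective_def by blast
    have h'h: "(\<lambda>y. h (c y)) \<in> rmod_hom R Y M"
    proof (rule homI)
      fix y assume "y \<in> carrier Y" then show "h (c y) \<in> carrier M" using cP Cs hom_closed[OF h(1)] by blast
    next
      fix x y assume xy: "x \<in> carrier Y" "y \<in> carrier Y"
      have "c (x \<oplus>\<^bsub>Y\<^esub> y) = c x \<oplus>\<^bsub>X\<^esub> c y"
        using cU[of "x \<oplus>\<^bsub>Y\<^esub> y" "c x \<oplus>\<^bsub>X\<^esub> c y"] cP[OF xy(1)] cP[OF xy(2)] submodD(3)[OF C]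
          hom_add[OF ph, of "c x" "c y"] Cs xy by (simp add: subsetD)
      then show "h (c (x \<oplus>\<^bsub>Y\<^esub> y)) = h (c x) \<oplus>\<^bsub>M\<^esub> h (c y)"
        using hom_add[OF h(1), of "c x" "c y"] cP[OF xy(1)] cP[OF xy(2)] Cs by (simp add: subsetD)
    next
      fix y r assume yr: "y \<in> carrier Y" "r \<in> carrier R"
      have "c (y \<odot>\<^bsub>Y\<^esub> r) = c y \<odot>\<^bsub>X\<^esub> r"
        using cU[of "y \<odot>\<^bsub>Y\<^esub> r" "c y \<odot>\<^bsub>X\<^esub> r"] cP[OF yr(1)] submodD(5)[OF C] hom_smult[OF ph]
          rm_closed[OF Y] Cs yr by (simp add: subsetD)
      then show "h (c (y \<odot>\<^bsub>Y\<^esub> r)) = h (c y) \<odot>\<^bsub>M\<^esub> r"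
        using hom_smult[OF h(1), of "c y" r] cP[OF yr(1)] yr Cs by (simp add: subsetD)
    qed
    have "\<forall>y\<in>carrier Y. g (h (c y)) = f y" using h(2) cP Cs by (metis subsetD)
    then show "\<exists>h\<in>rmod_hom R Y M. \<forall>x\<in>carrier Y. g (h x) = f x"
      using h'h by (intro bexI[of _ "\<lambda>y. h (c y)"]) auto
  qed
qed

lemma split_summand:
  assumes X: "right_module R X" and phi: "\<phi> \<in> rmod_hom R X X"
    and s: "s \<in> rmod_hom R (subm X (\<phi> ` carrier X)) X"
    and sp: "\<And>y. y \<in> \<phi> ` carrier X \<Longrightarrow> \<phi> (s y) = y"
  shows "direct_summand R (rmod_ker X X \<phi>) X"
proof -
  interpret X: abelian_group X using X rm_ag by blast
  let ?N = "\<phi> ` carrier X"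
  have N: "submod R ?N X" using img_submod[OF phi X X] .
  have NM: "right_module R (subm X ?N)" using subm_module[OF X N] .
  have C: "submod R (s ` ?N) X" using img_submod[OF s NM X] by simp
  have s0: "s \<zero>\<^bsub>X\<^esub> = \<zero>\<^bsub>X\<^esub>" using hom_zero[OF s rm_ag[OF NM] X.abelian_group_axioms] by simp
  have sc: "s y \<in> carrier X" if "y \<in> ?N" for y using hom_closed[OF s] that by simp
  have int: "rmod_ker X X \<phi> \<inter> s ` ?N = {\<zero>\<^bsub>X\<^esub>}"
  proof
    show "rmod_ker X X \<phi> \<inter> s ` ?N \<subseteq> {\<zero>\<^bsub>X\<^esub>}"
    proof
      fix x assume "x \<in> rmod_ker X X \<phi> \<inter> s ` ?N"
      then obtain y where y: "y \<in> ?N" "x = s y" "\<phi> x = \<zero>\<^bsub>X\<^esub>" by (auto simp: rmod_ker_def)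
      then have "y = \<zero>\<^bsub>X\<^esub>" using sp by metis
      then show "x \<in> {\<zero>\<^bsub>X\<^esub>}" using y s0 by simp
    qed
  next
    have "\<zero>\<^bsub>X\<^esub> \<in> ?N" using submodD(2)[OF N] .
    then show "{\<zero>\<^bsub>X\<^esub>} \<subseteq> rmod_ker X X \<phi> \<inter> s ` ?N"
      using s0 hom_zero[OF phi X.abelian_group_axioms X.abelian_group_axioms]
      by (auto simp: rmod_ker_def) (metis image_eqI)
  qed
  have dec: "\<forall>x\<in>carrier X. \<exists>a\<in>rmod_ker X X \<phi>. \<exists>b\<in>s ` ?N. x = a \<oplus>\<^bsub>X\<^esub> b"
  proof
    fix x assume x: "x \<in> carrier X"
    let ?b = "s (\<phi> x)"
    have yN: "\<phi> x \<in> ?N" using x by blast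
    have bc: "?b \<in> carrier X" using sc[OF yN] .
    have "\<phi> (x \<ominus>\<^bsub>X\<^esub> ?b) = \<phi> x \<ominus>\<^bsub>X\<^esub> \<phi> ?b"
      using hom_minus[OF phi X.abelian_group_axioms X.abelian_group_axioms x bc] .
    also have "\<dots> = \<zero>\<^bsub>X\<^esub>" using sp[OF yN] ag_minus_self[OF X.abelian_group_axioms] hom_closed[OF phi x] by simp
    finally have "x \<ominus>\<^bsub>X\<^esub> ?b \<in> rmod_ker X X \<phi>" using x bc by (simp add: rmod_ker_def)
    moreover have "x = (x \<ominus>\<^bsub>X\<^esub> ?b) \<oplus>\<^bsub>X\<^esub> ?b"
      using ag_add_minus_cancel[OF X.abelian_group_axioms x bc] x bc by (simp add: X.a_comm)
    ultimately show "\<exists>a\<in>rmod_ker X X \<phi>. \<exists>b\<in>s ` ?N. x = a \<oplus>\<^bsub>X\<^esub> b" using yN by blast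
  qed
  show ?thesis unfolding direct_summand_def
    using ker_submod[OF phi X X] C int dec by blast
qed



lemma a_to_b:
  fixes R :: "('r, 'c) ring_scheme" and M :: "('a, 'r) rmodule"
  assumes M: "right_module R M" and QP: "quasi_projective R M" and FR: "fin_sigma_rickart R M"
    and n: "n > 0" and N: "submod R N (dsum_pow M n)" and FG: "fin_gen_by R (subm (dsum_pow M n) N) M"
  shows "rel_projective R (subm (dsum_pow M n) N) M"
proof -
  let ?Y = "subm (dsum_pow M n) N"
  obtain m \<psi>0 where m: "m > 0" and p0: "\<psi>0 \<in> rmod_epi R (dsum_pow M m) ?Y"
    using FG unfolding fin_gen_by_def by blast
  define k where "k = m + n"
  have mk: "m \<le> k" and nk: "n \<le> k" and k: "k > 0" using m unfolding k_def by auto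
  have Pk: "right_module R (dsum_pow M k)" using P_module[OF M] .
  have Y: "right_module R ?Y" using subm_module[OF P_module[OF M] N] .
  have p0h: "\<psi>0 \<in> rmod_hom R (dsum_pow M m) ?Y" and p0s: "\<psi>0 ` carrier (dsum_pow M m) = N"
    using p0 by (auto simp: rmod_epi_def)
  define \<psi> where "\<psi> = (\<lambda>v. \<psi>0 (trunc M m v))"
  have ph: "\<psi> \<in> rmod_hom R (dsum_pow M k) ?Y"
    unfolding \<psi>_def using hom_comp[OF trunc_hom[OF M mk] p0h] .
  have ps: "\<psi> ` carrier (dsum_pow M k) = N"
  proof
    show "\<psi> ` carrier (dsum_pow M k) \<subseteq> N" using hom_closed[OF ph] by auto
  next
    show "N \<subseteq> \<psi> ` carrier (dsum_pow M k)"
    proof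
      fix y assume "y \<in> N"
      then obtain v where v: "v \<in> carrier (dsum_pow M m)" "y = \<psi>0 v" using p0s by blast
      have "v \<in> carrier (dsum_pow M k)" using incl_hom(2)[OF M mk] v(1) by blast
      moreover have "\<psi> v = y" unfolding \<psi>_def using trunc_id[OF v(1)] v(2) by simp
      ultimately show "y \<in> \<psi> ` carrier (dsum_pow M k)" by blast
    qed
  qed
  have pe: "\<psi> \<in> rmod_epi R (dsum_pow M k) ?Y" using ph ps by (simp add: rmod_epi_def)
  have Phi: "\<psi> \<in> rmod_hom R (dsum_pow M k) (dsum_pow M k)"
    using hom_comp[OF ph hom_comp[OF incl_sub[OF N] incl_hom(1)[OF M nk]]] by simp
  have "rickart R (dsum_pow M k)" using FR k unfolding fin_sigma_rickart_def by blast
  then have ds: "direct_summand R (rmod_ker (dsum_pow M k) (dsum_pow M k) \<psi>) (dsum_pow M k)"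
    using Phi unfolding rickart_def by blast
  have kereq: "rmod_ker (dsum_pow M k) (dsum_pow M k) \<psi> = rmod_ker (dsum_pow M k) ?Y \<psi>"
    by (simp add: rmod_ker_def)
  obtain C where C: "submod R C (dsum_pow M k)"
    "rmod_ker (dsum_pow M k) ?Y \<psi> \<inter> C = {\<zero>\<^bsub>dsum_pow M k\<^esub>}"
    "\<forall>x\<in>carrier (dsum_pow M k). \<exists>a\<in>rmod_ker (dsum_pow M k) ?Y \<psi>. \<exists>b\<in>C. x = a \<oplus>\<^bsub>dsum_pow M k\<^esub> b"
    using ds unfolding direct_summand_def kereq by blast
  have XP: "rel_projective R (dsum_pow M k) M"
    using sum_proj[OF M] QP unfolding quasi_projective_def by blast
  show ?thesis using summand_image[OF Pk Y XP pe C] .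
qed

lemma b_to_c:
  fixes R :: "('r, 'c) ring_scheme" and M :: "('a, 'r) rmodule"
  assumes M: "right_module R M" and FG: "fin_gen_by R (subm (dsum_pow M n) N) M"
    and YP: "rel_projective R (subm (dsum_pow M n) N) M"
  shows "quasi_projective R (subm (dsum_pow M n) N)"
proof -
  let ?Y = "subm (dsum_pow M n) N"
  obtain m \<psi>0 where m: "m > 0" and p0: "\<psi>0 \<in> rmod_epi R (dsum_pow M m) ?Y"
    using FG unfolding fin_gen_by_def by blast
  have p0h: "\<psi>0 \<in> rmod_hom R (dsum_pow M m) ?Y" using p0 by (simp add: rmod_epi_def)
  have KP: "rel_projective R ?Y (dsum_pow M m)" using key_lemma[OF M YP] .
  show ?thesis unfolding quasi_projective_def rel_projective_def
  proof (intro allI impI)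
    fix K :: "(nat \<Rightarrow> 'a, 'r) rmodule" and g f
    assume a: "right_module R K \<and> g \<in> rmod_epi R ?Y K \<and> f \<in> rmod_hom R ?Y K"
    have ge: "(\<lambda>v. g (\<psi>0 v)) \<in> rmod_epi R (dsum_pow M m) K" using epi_comp[OF p0] a by blast
    obtain h where h: "h \<in> rmod_hom R ?Y (dsum_pow M m)" "\<forall>y\<in>carrier ?Y. g (\<psi>0 (h y)) = f y"
      using KP a ge unfolding rel_projective_def by blast
    have "(\<lambda>y. \<psi>0 (h y)) \<in> rmod_hom R ?Y ?Y" using hom_comp[OF h(1) p0h] .
    then show "\<exists>h\<in>rmod_hom R ?Y ?Y. \<forall>x\<in>carrier ?Y. g (h x) = f x"
      using h(2) by (intro bexI[of _ "\<lambda>y. \<psi>0 (h y)"]) auto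
  qed
qed

definition sh :: "('a, 'r, 'd) rmodule_scheme \<Rightarrow> nat \<Rightarrow> (nat \<Rightarrow> 'a) \<Rightarrow> nat \<Rightarrow> 'a" where
  "sh M n v = (\<lambda>i. if i < n then v (i + n) else \<zero>\<^bsub>M\<^esub>)"
definition hi :: "('a, 'r, 'd) rmodule_scheme \<Rightarrow> nat \<Rightarrow> (nat \<Rightarrow> 'a) \<Rightarrow> nat \<Rightarrow> 'a" where
  "hi M n v = (\<lambda>i. if i < n then \<zero>\<^bsub>M\<^esub> else v i)"
definition up :: "('a, 'r, 'd) rmodule_scheme \<Rightarrow> nat \<Rightarrow> (nat \<Rightarrow> 'a) \<Rightarrow> nat \<Rightarrow> 'a" where
  "up M n x = (\<lambda>i. if n \<le> i \<and> i < n + n then x (i - n) else \<zero>\<^bsub>M\<^esub>)"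

lemma sh_hom:
  assumes M: "right_module R M"
  shows "sh M n \<in> rmod_hom R (dsum_pow M (n + n)) (dsum_pow M n)"
proof -
  interpret abelian_group M using M rm_ag by blast
  show ?thesis by (intro homI) (auto simp: P_carrier sh_def intro!: ext)
qed

lemma hi_hom:
  assumes M: "right_module R M"
  shows "hi M n \<in> rmod_hom R (dsum_pow M k) (dsum_pow M k)"
proof -
  interpret abelian_group M using M rm_ag by blast
  show ?thesis by (intro homI) (auto simp: P_carrier hi_def rm_zero_smult[OF M] intro!: ext)
qed

lemma up_props:
  assumes M: "right_module R M" and x: "x \<in> carrier (dsum_pow M n)"
  shows "up M n x \<in> carrier (dsum_pow M (n + n))" "sh M n (up M n x) = x" "trunc M n (up M n x) = (\<lambda>i. \<zero>\<^bsub>M\<^esub>)"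
proof -
  interpret abelian_group M using M rm_ag by blast
  show "up M n x \<in> carrier (dsum_pow M (n + n))" using x by (auto simp: P_carrier up_def)
  show "sh M n (up M n x) = x" using x by (auto simp: P_carrier up_def sh_def intro!: ext)
  show "trunc M n (up M n x) = (\<lambda>i. \<zero>\<^bsub>M\<^esub>)" by (auto simp: up_def trunc_def intro!: ext)
qed

lemma qp_from_P1:
  fixes R :: "('r, 'c) ring_scheme" and M :: "('a, 'r) rmodule"
  assumes M: "right_module R M" and QP1: "quasi_projective R (dsum_pow M 1)"
  shows "quasi_projective R M"
  unfolding quasi_projective_def rel_projective_def
proof (intro allI impI)
  fix K :: "('a, 'r) rmodule" and g f
  assume a: "right_module R K \<and> g \<in> rmod_epi R M K \<and> f \<in> rmod_hom R M K"
  have K: "right_module R K" and gh: "g \<in> rmod_hom R M K" and gs: "g ` carrier M = carrier K"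
    and f: "f \<in> rmod_hom R M K" using a by (auto simp: rmod_epi_def)
  define e :: "'a \<Rightarrow> nat \<Rightarrow> 'a" where "e = (\<lambda>k i. k)"
  have einj: "e a = e b \<Longrightarrow> a = b" for a b unfolding e_def by (drule fun_cong[of _ _ 0]) simp
  have inj: "inj_on e (carrier K)" using einj by (meson inj_onI)
  let ?K = "tr K e"
  have K1: "right_module R ?K" using tr_module[OF K inj] .
  have eh: "e \<in> rmod_hom R K ?K" using tr_hom[OF K inj] .
  have ev: "(\<lambda>v. v 0) \<in> rmod_hom R (dsum_pow M 1) M" using ev_hom[of 0 1] by simp
  have g1h: "(\<lambda>v. e (g (v 0))) \<in> rmod_hom R (dsum_pow M 1) ?K"
    using hom_comp[OF ev hom_comp[OF gh eh]] .
  have g1s: "(\<lambda>v. e (g (v 0))) ` carrier (dsum_pow M 1) = carrier ?K"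
  proof
    show "(\<lambda>v. e (g (v 0))) ` carrier (dsum_pow M 1) \<subseteq> carrier ?K" using hom_closed[OF g1h] by blast
  next
    show "carrier ?K \<subseteq> (\<lambda>v. e (g (v 0))) ` carrier (dsum_pow M 1)"
    proof
      fix z assume "z \<in> carrier ?K"
      then obtain k where k: "k \<in> carrier K" "z = e k" by (auto simp: tr_def)
      then obtain x where x: "x \<in> carrier M" "k = g x" using gs by blast
      have "emb M 0 x \<in> carrier (dsum_pow M 1)" using hom_closed[OF emb_hom[OF M, of 0 1] x(1)] by simp
      moreover have "emb M 0 x 0 = x" by (simp add: emb_def)
      ultimately show "z \<in> (\<lambda>v. e (g (v 0))) ` carrier (dsum_pow M 1)" using k x
        by (intro image_eqI[of _ _ "emb M 0 x"]) auto
    qed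
  qed
  have g1: "(\<lambda>v. e (g (v 0))) \<in> rmod_epi R (dsum_pow M 1) ?K" using g1h g1s by (simp add: rmod_epi_def)
  have f1: "(\<lambda>v. e (f (v 0))) \<in> rmod_hom R (dsum_pow M 1) ?K" using hom_comp[OF ev hom_comp[OF f eh]] .
  obtain h1 where h1: "h1 \<in> rmod_hom R (dsum_pow M 1) (dsum_pow M 1)"
    "\<forall>v\<in>carrier (dsum_pow M 1). e (g (h1 v 0)) = e (f (v 0))"
    using QP1 K1 g1 f1 unfolding quasi_projective_def rel_projective_def by blast
  have hh: "(\<lambda>x. h1 (emb M 0 x) 0) \<in> rmod_hom R M M"
    using hom_comp[OF emb_hom[OF M, of 0 1] hom_comp[OF h1(1) ev]] by simp
  have "g (h1 (emb M 0 x) 0) = f x" if x: "x \<in> carrier M" for x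
  proof -
    have "emb M 0 x \<in> carrier (dsum_pow M 1)" using hom_closed[OF emb_hom[OF M, of 0 1] x] by simp
    then have "e (g (h1 (emb M 0 x) 0)) = e (f (emb M 0 x 0))" using h1(2) by blast
    then have "g (h1 (emb M 0 x) 0) = f (emb M 0 x 0)" by (rule einj)
    then show ?thesis by (simp add: emb_def)
  qed
  then show "\<exists>h\<in>rmod_hom R M M. \<forall>x\<in>carrier M. g (h x) = f x"
    using hh by (intro bexI[of _ "\<lambda>x. h1 (emb M 0 x) 0"]) auto
qed



lemma c_to_rickart:
  fixes R :: "('r, 'c) ring_scheme" and M :: "('a, 'r) rmodule"
  assumes M: "right_module R M" and n: "n > 0"
    and H: "\<forall>n>0. \<forall>D N. direct_summand R D (dsum_pow M n) \<and> submod R N (dsum_pow M n) \<and> N \<subseteq> D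
              \<and> fin_gen_by R (subm (dsum_pow M n) N) M
            \<longrightarrow> quasi_projective R (subm (dsum_pow M n) N)"
  shows "rickart R (dsum_pow M n)"
  unfolding rickart_def
proof
  interpret abelian_group M using M rm_ag by blast
  fix \<phi> assume phi: "\<phi> \<in> rmod_hom R (dsum_pow M n) (dsum_pow M n)"
  let ?Pn = "dsum_pow M n" and ?P2 = "dsum_pow M (n + n)"
  have Pn: "right_module R ?Pn" and P2: "right_module R ?P2" using P_module[OF M] by auto
  define N where "N = \<phi> ` carrier ?Pn"
  have N: "submod R N ?Pn" unfolding N_def using img_submod[OF phi Pn Pn] .
  have Nsub: "N \<subseteq> carrier ?Pn" using submodD(1)[OF N] .
  have nn: "n \<le> n + n" by simp
  have tau: "trunc M n \<in> rmod_hom R ?P2 ?Pn" using trunc_hom[OF M nn] .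
  have incl: "(\<lambda>v. v) \<in> rmod_hom R ?Pn ?P2" and inclc: "carrier ?Pn \<subseteq> carrier ?P2"
    using incl_hom[OF M nn] by auto
  define T where "T = {v \<in> carrier ?P2. trunc M n v \<in> N}"
  have T: "submod R T ?P2" unfolding T_def using preimage_submod[OF tau P2 Pn N] .
  have Tsub: "T \<subseteq> carrier ?P2" unfolding T_def by blast
  define \<Phi> where "\<Phi> = (\<lambda>w. \<phi> (trunc M n w) \<oplus>\<^bsub>?P2\<^esub> hi M n w)"
  have Phih: "\<Phi> \<in> rmod_hom R ?P2 ?P2"
    unfolding \<Phi>_def using hom_sum[OF hom_comp[OF tau hom_comp[OF phi incl]] hi_hom[OF M] P2] .
  have trPhi: "trunc M n (z \<oplus>\<^bsub>?P2\<^esub> hi M n w) = z" if z: "z \<in> carrier ?Pn" for z w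
    using z by (auto simp: P_carrier trunc_def hi_def intro!: ext)
  have PhiT: "\<Phi> w \<in> T" if w: "w \<in> carrier ?P2" for w
  proof -
    have z: "\<phi> (trunc M n w) \<in> carrier ?Pn" using hom_closed[OF phi hom_closed[OF tau w]] .
    have "trunc M n (\<Phi> w) = \<phi> (trunc M n w)" unfolding \<Phi>_def using trPhi[OF z] .
    then show ?thesis unfolding T_def N_def using hom_closed[OF Phih w] hom_closed[OF tau w] by auto
  qed
  have PhiS: "\<Phi> ` carrier ?P2 = T"
  proof
    show "\<Phi> ` carrier ?P2 \<subseteq> T" using PhiT by blast
  next
    show "T \<subseteq> \<Phi> ` carrier ?P2"
    proof
      fix v assume v: "v \<in> T"
      then have vc: "v \<in> carrier ?P2" and tv: "trunc M n v \<in> N" unfolding T_def by auto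
      obtain x where x: "x \<in> carrier ?Pn" "\<phi> x = trunc M n v" using tv unfolding N_def by auto
      define w where "w = x \<oplus>\<^bsub>?P2\<^esub> hi M n v"
      have wc: "w \<in> carrier ?P2" unfolding w_def
        using subsetD[OF inclc x(1)] hom_closed[OF hi_hom[OF M] vc] a_closed by (auto simp: P_carrier)
      have tw: "trunc M n w = x" unfolding w_def using trPhi[OF x(1)] .
      have hw: "hi M n w = hi M n v" unfolding w_def using x(1) vc by (auto simp: P_carrier hi_def intro!: ext) (metis l_zero not_le zero_closed)
      have "\<Phi> w = trunc M n v \<oplus>\<^bsub>?P2\<^esub> hi M n v" unfolding \<Phi>_def using tw hw x(2) by simp
      also have "\<dots> = v" using vc by (auto simp: P_carrier hi_def trunc_def intro!: ext) (metis l_zero not_le zero_closed)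
      finally show "v \<in> \<Phi> ` carrier ?P2" using wc by (metis image_eqI)
    qed
  qed
  have fg: "fin_gen_by R (subm ?P2 T) M"
  proof -
    have "\<Phi> \<in> rmod_hom R ?P2 (subm ?P2 T)" using hom_into_subm[OF Phih PhiT] .
    then have "\<Phi> \<in> rmod_epi R ?P2 (subm ?P2 T)" using PhiS by (simp add: rmod_epi_def)
    then show ?thesis unfolding fin_gen_by_def using n by (intro exI[of _ "n + n"]) auto
  qed
  have QT: "quasi_projective R (subm ?P2 T)"
    using H n whole_summand[OF P2] T Tsub fg by (metis add_pos_pos)
  let ?K = "subm ?Pn N"
  have K: "right_module R ?K" using subm_module[OF Pn N] .
  have sht: "sh M n \<in> rmod_hom R ?P2 ?Pn" using sh_hom[OF M] .
  have gh: "(\<lambda>v. \<phi> (sh M n v)) \<in> rmod_hom R (subm ?P2 T) ?K"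
    by (rule hom_into_subm[OF hom_from_subm[OF hom_comp[OF sht phi] T]])
       (auto simp: N_def intro!: imageI hom_closed[OF sht] subsetD[OF Tsub])
  have gs: "(\<lambda>v. \<phi> (sh M n v)) ` T = N"
  proof
    show "(\<lambda>v. \<phi> (sh M n v)) ` T \<subseteq> N" unfolding N_def using hom_closed[OF sht] Tsub by blast
  next
    show "N \<subseteq> (\<lambda>v. \<phi> (sh M n v)) ` T"
    proof
      fix y assume "y \<in> N"
      then obtain x where x: "x \<in> carrier ?Pn" "y = \<phi> x" unfolding N_def by blast
      have "up M n x \<in> T" unfolding T_def using up_props[OF M x(1)] submodD(2)[OF N] by simp
      moreover have "\<phi> (sh M n (up M n x)) = y" using up_props[OF M x(1)] x by simp
      ultimately show "y \<in> (\<lambda>v. \<phi> (sh M n v)) ` T" by (metis image_eqI)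
    qed
  qed
  have ge: "(\<lambda>v. \<phi> (sh M n v)) \<in> rmod_epi R (subm ?P2 T) ?K" using gh gs by (simp add: rmod_epi_def)
  have fh: "trunc M n \<in> rmod_hom R (subm ?P2 T) ?K"
    by (rule hom_into_subm[OF hom_from_subm[OF tau T]]) (simp add: T_def)
  obtain h where h: "h \<in> rmod_hom R (subm ?P2 T) (subm ?P2 T)"
    "\<forall>v\<in>T. \<phi> (sh M n (h v)) = trunc M n v"
    using QT K ge fh unfolding quasi_projective_def rel_projective_def by fastforce
  have NT: "y \<in> T" if "y \<in> N" for y
    using that Nsub inclc trunc_id[of y M n] unfolding T_def by auto
  have idh: "(\<lambda>y. y) \<in> rmod_hom R (subm ?Pn N) (subm ?P2 T)"
    by (rule hom_into_subm[OF hom_from_subm[OF incl N]]) (simp add: NT)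
  have hP: "(\<lambda>v. v) \<in> rmod_hom R (subm ?P2 T) ?P2" using incl_sub[OF T] .
  have sh': "(\<lambda>y. sh M n (h y)) \<in> rmod_hom R (subm ?Pn N) ?Pn"
    using hom_comp[OF idh hom_comp[OF h(1) hom_comp[OF hP sht]]] by simp
  have sp: "\<phi> (sh M n (h y)) = y" if "y \<in> N" for y
    using h(2) NT[OF that] trunc_id[of y M n] that Nsub by auto
  show "direct_summand R (rmod_ker ?Pn ?Pn \<phi>) ?Pn"
    by (rule split_summand[OF Pn phi, of "\<lambda>y. sh M n (h y)"]) (use sh' sp in \<open>auto simp: N_def\<close>)
qed



lemma c_to_a:
  fixes R :: "('r, 'c) ring_scheme" and M :: "('a, 'r) rmodule"
  assumes M: "right_module R M"
    and H: "\<forall>n>0. \<forall>D N. direct_summand R D (dsum_pow M n) \<and> submod R N (dsum_pow M n) \<and> N \<subseteq> D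
              \<and> fin_gen_by R (subm (dsum_pow M n) N) M
            \<longrightarrow> quasi_projective R (subm (dsum_pow M n) N)"
  shows "quasi_projective R M \<and> fin_sigma_rickart R M"
proof
  let ?P = "dsum_pow M 1"
  have P: "right_module R ?P" using P_module[OF M] .
  have ds: "direct_summand R (carrier ?P) ?P" using whole_summand[OF P] .
  then have sm: "submod R (carrier ?P) ?P" by (simp add: direct_summand_def)
  have "(\<lambda>v. v) \<in> rmod_epi R ?P ?P" unfolding rmod_epi_def by (auto intro: homI)
  then have fg: "fin_gen_by R (subm ?P (carrier ?P)) M" unfolding fin_gen_by_def
    by (intro exI[of _ 1]) auto
  have "quasi_projective R (subm ?P (carrier ?P))"
    using H[rule_format, of 1 "carrier ?P" "carrier ?P"] ds sm fg by simp
  then show "quasi_projective R M" using qp_from_P1[OF M] by simp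
next
  show "fin_sigma_rickart R M" unfolding fin_sigma_rickart_def
  proof (intro allI impI)
    fix n :: nat assume "n > 0" then show "rickart R (dsum_pow M n)" using c_to_rickart[OF M _ H] by simp
  qed
qed

theorem mainTheorem5:
  fixes R :: "('r, 'c) ring_scheme" and M :: "('a, 'r) rmodule"
  assumes "right_module R M"
  shows "((quasi_projective R M \<and> fin_sigma_rickart R M)
     \<longleftrightarrow> (\<forall>n>0. \<forall>D N. direct_summand R D (dsum_pow M n) \<and> submod R N (dsum_pow M n) \<and> N \<subseteq> D
              \<and> fin_gen_by R (subm (dsum_pow M n) N) M
            \<longrightarrow> rel_projective R (subm (dsum_pow M n) N) M))
     \<and> ((quasi_projective R M \<and> fin_sigma_rickart R M)
     \<longleftrightarrow> (\<forall>n>0. \<forall>D N. direct_summand R D (dsum_pow M n) \<and> submod R N (dsum_pow M n) \<and> N \<subseteq> D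
              \<and> fin_gen_by R (subm (dsum_pow M n) N) M
            \<longrightarrow> quasi_projective R (subm (dsum_pow M n) N)))"
proof -
  have M: "right_module R M" by fact
  have AB: "\<forall>n>0. \<forall>D N. direct_summand R D (dsum_pow M n) \<and> submod R N (dsum_pow M n) \<and> N \<subseteq> D
              \<and> fin_gen_by R (subm (dsum_pow M n) N) M
            \<longrightarrow> rel_projective R (subm (dsum_pow M n) N) M"
    if "quasi_projective R M \<and> fin_sigma_rickart R M"
  proof (intro allI impI)
    fix n :: nat and D N assume "n > 0" and a: "direct_summand R D (dsum_pow M n) \<and> submod R N (dsum_pow M n) \<and> N \<subseteq> D
              \<and> fin_gen_by R (subm (dsum_pow M n) N) M"
    then show "rel_projective R (subm (dsum_pow M n) N) M" using a_to_b[OF M, where n=n and N=N] that by simp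
  qed
  have BC: "\<forall>n>0. \<forall>D N. direct_summand R D (dsum_pow M n) \<and> submod R N (dsum_pow M n) \<and> N \<subseteq> D
              \<and> fin_gen_by R (subm (dsum_pow M n) N) M
            \<longrightarrow> quasi_projective R (subm (dsum_pow M n) N)"
    if "\<forall>n>0. \<forall>D N. direct_summand R D (dsum_pow M n) \<and> submod R N (dsum_pow M n) \<and> N \<subseteq> D
              \<and> fin_gen_by R (subm (dsum_pow M n) N) M
            \<longrightarrow> rel_projective R (subm (dsum_pow M n) N) M"
  proof (intro allI impI)
    fix n :: nat and D N assume "n > 0" and a: "direct_summand R D (dsum_pow M n) \<and> submod R N (dsum_pow M n) \<and> N \<subseteq> D
              \<and> fin_gen_by R (subm (dsum_pow M n) N) M"
    have "rel_projective R (subm (dsum_pow M n) N) M" using that[rule_format, of n D N] \<open>n > 0\<close> a by simp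
    then show "quasi_projective R (subm (dsum_pow M n) N)" using b_to_c[OF M, where n=n and N=N] a by simp
  qed
  have CA: "quasi_projective R M \<and> fin_sigma_rickart R M"
    if "\<forall>n>0. \<forall>D N. direct_summand R D (dsum_pow M n) \<and> submod R N (dsum_pow M n) \<and> N \<subseteq> D
              \<and> fin_gen_by R (subm (dsum_pow M n) N) M
            \<longrightarrow> quasi_projective R (subm (dsum_pow M n) N)"
    using c_to_a[OF M that] .
  show ?thesis
  proof (rule conjI; rule iffI)
    assume h: "quasi_projective R M \<and> fin_sigma_rickart R M"
    show "\<forall>n>0. \<forall>D N. direct_summand R D (dsum_pow M n) \<and> submod R N (dsum_pow M n) \<and> N \<subseteq> D
              \<and> fin_gen_by R (subm (dsum_pow M n) N) M
            \<longrightarrow> rel_projective R (subm (dsum_pow M n) N) M" using AB[OF h] .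
  next
    assume h: "\<forall>n>0. \<forall>D N. direct_summand R D (dsum_pow M n) \<and> submod R N (dsum_pow M n) \<and> N \<subseteq> D
              \<and> fin_gen_by R (subm (dsum_pow M n) N) M
            \<longrightarrow> rel_projective R (subm (dsum_pow M n) N) M"
    show "quasi_projective R M \<and> fin_sigma_rickart R M" using CA[OF BC[OF h]] .
  next
    assume h: "quasi_projective R M \<and> fin_sigma_rickart R M"
    show "\<forall>n>0. \<forall>D N. direct_summand R D (dsum_pow M n) \<and> submod R N (dsum_pow M n) \<and> N \<subseteq> D
              \<and> fin_gen_by R (subm (dsum_pow M n) N) M
            \<longrightarrow> quasi_projective R (subm (dsum_pow M n) N)" using BC[OF AB[OF h]] .
  next
    assume h: "\<forall>n>0. \<forall>D N. direct_summand R D (dsum_pow M n) \<and> submod R N (dsum_pow M n) \<and> N \<subseteq> D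
              \<and> fin_gen_by R (subm (dsum_pow M n) N) M
            \<longrightarrow> quasi_projective R (subm (dsum_pow M n) N)"
    show "quasi_projective R M \<and> fin_sigma_rickart R M" using CA[OF h] .
  qed
qed

end
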